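(* Let $\pi$ be a representation of $\mathcal A_\alpha$ on a Hilbert space of finite dimension $n$. (i) $\Lambda_{T(\pi)}=2-\Lambda_\pi$. (ii) Let $\alpha>0$, $\alpha\ne1$. (a) If $\operatorname{rk}\pi(x_1)+\operatorname{rk}\pi(x_2)>n=\operatorname{rk}\pi(x_3)+\operatorname{rk}\pi(x_4)$, then $\Lambda_{S(\pi)}=\{0\}\cup\big(\frac{\alpha}{\alpha-1}-\frac1{\alpha-1}\Lambda_\pi\big)$. (b) If $\operatorname{rk}\pi(x_3)+\operatorname{rk}\pi(x_4)>n=\operatorname{rk}\pi(x_1)+\operatorname{rk}\pi(x_2)$, then $\Lambda_{S(\pi)}=\{\frac{\alpha}{\alpha-1}\}\cup\big(\frac{\alpha}{\alpha-1}-\frac1{\alpha-1}\Lambda_\pi\big)$. (iii) Let $\alpha\in(0,3)$. (a) If $\operatorname{rk}\pi(x_1)+\operatorname{rk}\pi(x_2)<n=\operatorname{rk}\pi(x_3)+\operatorname{rk}\pi(x_4)$, then $\Lambda_{\Phi^+(\pi)}=\{0\}\cup\big(1-\frac1{3-\alpha}+\frac1{3-\alpha}\Lambda_\pi\big)$. (b) If $\operatorname{rk}\pi(x_3)+\operatorname{rk}\pi(x_4)<n=\operatorname{rk}\pi(x_1)+\operatorname{rk}\pi(x_2)$, then $\Lambda_{\Phi^+(\pi)}=\{1+\frac1{3-\alpha}\}\cup\big(1-\frac1{3-\alpha}+\frac1{3-\alpha}\Lambda_\pi\big)$. (Here $c-d\Lambda=\{c-d\lambda:\lambda\in\Lambda\}$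 etc.)
   Context: For $\alpha\in\mathbb R$, a representation $\pi$ of $\mathcal A_\alpha$ (the universal C*-algebra generated by projections $x_1,\dots,x_4$ with $x_1+\dots+x_4=\alpha$) on a Hilbert space $\mathcal H$ is a quadruple $(\pi(x_1),\dots,\pi(x_4))$ of orthogonal projections on $\mathcal H$ with sum $\alpha I$. For finite-dimensional $\pi$, $\Lambda_\pi\subseteq[0,2]$ denotes the set of eigenvalues of $\pi(x_3)+\pi(x_4)$. Linear reflection: $T(\pi)$ is the representation of $\mathcal A_{4-\alpha}$ on $\mathcal H$ with $T(\pi)(x_i)=I-\pi(x_i)$. Hyperbolic reflection: for $\alpha>0$, $\alpha\neq1$ and $\pi$ on $\mathcal H$, let $\widehat{\mathcal H}=\bigoplus_{i=1}^4\operatorname{ran}\pi(x_i)$, let $w_i:\operatorname{ran}\pi(x_i)\to\widehat{\mathcal H}$ be the canonical injections, $u_i:\operatorname{ran}\pi(x_i)\to\mathcal H$ the inclusions, and $u=\frac1{\sqrt\alpha}(u_1^*,u_2^*,u_3^*,u_4^* )^{T}:\mathcal H\to\widehat{\mathcal H}$ (an isometry). Let $\mathcal K=\operatorname{ran}(I-uu^* )\subseteq\widehat{\mathcal H}$ with inclusion $v:\mathcal K\to\widehat{\mathcal H}$. Then $S(\pi)$ is the representation of $\mathcal A_{\alpha/(\alpha-1)}$ on $\mathcal K$ with $S(\pi)(x_i)=\frac{\alpha}{\alpha-1}v^*w_iw_i^*v$ (these are projections summing to $\frac\alpha{\alpha-1}I$). For $\alpha\in(0,3)$, $\Phi^+(\pi)=S(T(\pi))$,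 a representation of $\mathcal A_{1+\frac1{3-\alpha}}$. *)

theory Defs
  imports Complex_Main "Jordan_Normal_Form.Schur_Decomposition" "Jordan_Normal_Form.DL_Rank"
begin

text \<open>A finite-dimensional Hilbert space of dimension n is modelled as complex column
vectors of length n with the standard inner product; operators are complex n x n matrices.
A representation of A_alpha is a family P indexed by 1..4 of orthogonal projections
(idempotent, self-adjoint) summing to alpha times the identity.\<close>

definition is_rep :: "nat \<Rightarrow> real \<Rightarrow> (nat \<Rightarrow> complex mat) \<Rightarrow> bool" where
  "is_rep n \<alpha> P \<longleftrightarrow>
     (\<forall>i\<in>{1..4::nat}. P i \<in> carrier_mat n n \<and> P i * P i = P i \<and> mat_adjoint (P i) = P i) \<and>
     P 1 + P 2 + P 3 + P 4 = of_real \<alpha> \<cdot>\<^sub>m 1\<^sub>m n"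

definition Lam :: "(nat \<Rightarrow> complex mat) \<Rightarrow> complex set" where
  "Lam P = {l. eigenvalue (P 3 + P 4) l}"

definition rk :: "nat \<Rightarrow> complex mat \<Rightarrow> nat" where
  "rk n A = vec_space.rank n (A :: complex mat)"

definition lin_refl :: "nat \<Rightarrow> (nat \<Rightarrow> complex mat) \<Rightarrow> (nat \<Rightarrow> complex mat)" where
  "lin_refl n P = (\<lambda>i. 1\<^sub>m n - P i)"

definition ranM :: "nat \<Rightarrow> complex mat \<Rightarrow> complex vec set" where
  "ranM n A = {A *\<^sub>v x | x. x \<in> carrier_vec n}"

definition hat_space :: "nat \<Rightarrow> (nat \<Rightarrow> complex mat) \<Rightarrow> (nat \<Rightarrow> complex vec) set" where
  "hat_space n P = {h. (\<forall>i\<in>{1..4::nat}. h i \<in> ranM n (P i)) \<and> (\<forall>i. i \<notin> {1..4} \<longrightarrow> h i = 0\<^sub>v n)}"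

definition hat_zero :: "nat \<Rightarrow> nat \<Rightarrow> complex vec" where
  "hat_zero n = (\<lambda>i. 0\<^sub>v n)"

definition hat_inner :: "(nat \<Rightarrow> complex vec) \<Rightarrow> (nat \<Rightarrow> complex vec) \<Rightarrow> complex" where
  "hat_inner h g = (\<Sum>i\<in>{1..4::nat}. h i \<bullet>c g i)"

text \<open>The isometry u = alpha^(-1/2) (u1*, ..., u4*)^T, where ui* (the adjoint of the
inclusion of ran P i) is the orthogonal projection P i, and its adjoint
u* h = alpha^(-1/2) (h1 + h2 + h3 + h4).\<close>
definition hat_u :: "nat \<Rightarrow> real \<Rightarrow> (nat \<Rightarrow> complex mat) \<Rightarrow> complex vec \<Rightarrow> (nat \<Rightarrow> complex vec)" where
  "hat_u n \<alpha> P x = (\<lambda>i. if i \<in> {1..4} then of_real (1 / sqrt \<alpha>) \<cdot>\<^sub>v (P i *\<^sub>v x) else 0\<^sub>v n)"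

definition hat_u_adj :: "real \<Rightarrow> (nat \<Rightarrow> complex vec) \<Rightarrow> complex vec" where
  "hat_u_adj \<alpha> h = of_real (1 / sqrt \<alpha>) \<cdot>\<^sub>v (h 1 + h 2 + h 3 + h 4)"

definition hat_K :: "nat \<Rightarrow> real \<Rightarrow> (nat \<Rightarrow> complex mat) \<Rightarrow> (nat \<Rightarrow> complex vec) set" where
  "hat_K n \<alpha> P = {(\<lambda>i. h i - hat_u n \<alpha> P (hat_u_adj \<alpha> h) i) | h. h \<in> hat_space n P}"

definition hat_E :: "nat \<Rightarrow> nat \<Rightarrow> (nat \<Rightarrow> complex vec) \<Rightarrow> (nat \<Rightarrow> complex vec)" where
  "hat_E n i h = (\<lambda>j. if j = i then h j else 0\<^sub>v n)"

text \<open>S(pi)(x_i) = c v* w_i w_i* v on K, c = alpha/(alpha-1). An element l is an eigenvalue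
of S(pi)(x3) + S(pi)(x4) iff there is a nonzero k in K with v*(A v k) = l k, where
A = c (w3 w3* + w4 w4*); since v* is the adjoint of the inclusion v of K, this says exactly
that <A k, k'> = l <k, k'> for all k' in K.\<close>
definition hyp_Lam :: "nat \<Rightarrow> real \<Rightarrow> (nat \<Rightarrow> complex mat) \<Rightarrow> complex set" where
  "hyp_Lam n \<alpha> P = {l. \<exists>k\<in>hat_K n \<alpha> P. k \<noteq> hat_zero n \<and>
      (\<forall>k'\<in>hat_K n \<alpha> P.
         hat_inner (\<lambda>j. of_real (\<alpha> / (\<alpha> - 1)) \<cdot>\<^sub>v (hat_E n 3 k j + hat_E n 4 k j)) k'
           = l * hat_inner k k')}"

text \<open>Lambda of Phi+(pi) = S(T(pi)), T(pi) being a representation of A_(4-alpha).\<close>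
definition phi_plus_Lam :: "nat \<Rightarrow> real \<Rightarrow> (nat \<Rightarrow> complex mat) \<Rightarrow> complex set" where
  "phi_plus_Lam n \<alpha> P = hyp_Lam n (4 - \<alpha>) (lin_refl n P)"

end

theory Submission
  imports Defs
begin

lemma wide_kernel:
  fixes M :: "complex mat"
  assumes M: "M \<in> carrier_mat n m" and nm: "n < m"
  shows "\<exists>v\<in>carrier_vec m. v \<noteq> 0\<^sub>v m \<and> M *\<^sub>v v = 0\<^sub>v n"
proof -
  define M' where "M' = mat m m (\<lambda>(i,j). if i < n then M $$ (i,j) else 0)"
  have M'c: "M' \<in> carrier_mat m m" unfolding M'_def by simp
  have "M' = mat\<^sub>r m m (\<lambda>i. if i = m - 1 then 0\<^sub>v m else row M' i)"
    by (rule eq_matI) (use nm in \<open>auto simp: M'_def\<close>)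
  hence "det M' = 0" using det_row_0[of "m-1" m "\<lambda>i. row M' i"] nm M'c by auto
  then obtain v where v: "v \<in> carrier_vec m" "v \<noteq> 0\<^sub>v m" "M' *\<^sub>v v = 0\<^sub>v m"
    using det_0_iff_vec_prod_zero_field[OF M'c] by auto
  have "M *\<^sub>v v = 0\<^sub>v n"
  proof (rule eq_vecI)
    fix i assume "i < dim_vec (0\<^sub>v n :: complex vec)"
    hence i: "i < n" by simp
    have "(M' *\<^sub>v v) $ i = 0" using v(3) i nm by simp
    moreover have "(M' *\<^sub>v v) $ i = (M *\<^sub>v v) $ i"
      using i nm M v(1) by (auto simp: M'_def scalar_prod_def intro!: sum.cong)
    ultimately show "(M *\<^sub>v v) $ i = 0\<^sub>v n $ i" using i by simp
  qed (use M in auto)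
  thus ?thesis using v by blast
qed

lemma range_basis:
  fixes A :: "complex mat"
  assumes A: "A \<in> carrier_mat n n"
  shows "\<exists>B\<in>carrier_mat n (rk n A). set (cols B) \<subseteq> set (cols A) \<and>
            (\<forall>a\<in>carrier_vec (rk n A). B *\<^sub>v a = 0\<^sub>v n \<longrightarrow> a = 0\<^sub>v (rk n A))"
proof -
  interpret vec_space "TYPE(complex)" n .
  have li0: "lin_indpt {}"
    by (metis empty_subsetI fin_dim finite_basis_exists subset_li_is_li vec_vs vectorspace.basis_def)
  obtain S where S: "finite S" "maximal S (\<lambda>T. T \<subseteq> set (cols A) \<and> lin_indpt T)"
    using maximal_exists_superset[of "set (cols A)" "\<lambda>T. T \<subseteq> set (cols A) \<and> lin_indpt T" "{}"] li0
    by auto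
  have rk: "rk n A = card S" unfolding rk_def using rank_card_indpt[OF A S(2)] .
  have Ssub: "S \<subseteq> set (cols A)" "lin_indpt S" using S(2) unfolding maximal_def by auto
  have Scar: "S \<subseteq> carrier_vec n" using Ssub(1) A cols_dim by blast
  obtain xs where xs: "set xs = S" "distinct xs" using finite_distinct_list[OF S(1)] by auto
  define B where "B = mat_of_cols n xs"
  have lenx: "length xs = rk n A" using rk xs distinct_card by metis
  have Bc: "B \<in> carrier_mat n (rk n A)" unfolding B_def lenx[symmetric] by simp
  have cB: "cols B = xs" unfolding B_def using Scar xs by (simp add: cols_mat_of_cols)
  have ker: "\<forall>a\<in>carrier_vec (rk n A). B *\<^sub>v a = 0\<^sub>v n \<longrightarrow> a = 0\<^sub>v (rk n A)"
  proof (intro ballI impI, rule ccontr)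
    fix a assume a: "a \<in> carrier_vec (rk n A)" "B *\<^sub>v a = 0\<^sub>v n" "a \<noteq> 0\<^sub>v (rk n A)"
    have "lin_dep (set (cols B))" using lin_depI[OF Bc a(1) a(3) a(2)] cB xs by auto
    thus False using Ssub(2) cB xs by auto
  qed
  show ?thesis using Bc cB xs Ssub ker by auto
qed

lemma col_proj:
  fixes P B :: "complex mat"
  assumes P: "P \<in> carrier_mat n n" "P * P = P" and B: "B \<in> carrier_mat n r"
    and sub: "set (cols B) \<subseteq> set (cols P)"
  shows "P * B = B"
proof (rule eq_matI)
  fix i j assume i: "i < dim_row B" and j: "j < dim_col B"
  have "col B j \<in> set (cols P)" using sub j by (metis cols_length cols_nth nth_mem subsetD)
  then obtain k where k: "k < n" "col B j = col P k" using P(1)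
    by (metis cols_length cols_nth in_set_conv_nth carrier_matD(2))
  have "P *\<^sub>v col B j = col B j"
    using k P col_mult2[OF P(1) P(1) k(1)] by simp
  hence e: "P *\<^sub>v col B j = col B j" .
  have cP: "col (P * B) j = P *\<^sub>v col B j" using col_mult2[OF P(1) B] j B by simp
  have "(P * B) $$ (i, j) = col (P * B) j $ i" using i j P B by simp
  also have "\<dots> = B $$ (i,j)" unfolding cP e using i j B by simp
  finally show "(P * B) $$ (i, j) = B $$ (i, j)" .
qed (use P B in auto)

lemma cat_mult:
  fixes B1 B2 :: "complex mat"
  assumes B1: "B1 \<in> carrier_mat n r" and B2: "B2 \<in> carrier_mat n s"
    and a: "a \<in> carrier_vec r" and b: "b \<in> carrier_vec s"
  shows "four_block_mat B1 B2 (0\<^sub>m 0 r) (0\<^sub>m 0 s) *\<^sub>v (a @\<^sub>v b) = B1 *\<^sub>v a + B2 *\<^sub>v b"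
proof -
  have "four_block_mat B1 B2 (0\<^sub>m 0 r) (0\<^sub>m 0 s) *\<^sub>v (a @\<^sub>v b) =
     (B1 *\<^sub>v a + B2 *\<^sub>v b) @\<^sub>v (0\<^sub>m 0 r *\<^sub>v a + 0\<^sub>m 0 s *\<^sub>v b)"
    by (rule four_block_mat_mult_vec[OF B1 B2 _ _ a b]) auto
  also have "\<dots> = B1 *\<^sub>v a + B2 *\<^sub>v b"
    by (rule eq_vecI) (use B1 B2 a b in auto)
  finally show ?thesis .
qed

lemma D1:
  fixes P Q :: "complex mat"
  assumes P: "P \<in> carrier_mat n n" "P * P = P" and Q: "Q \<in> carrier_mat n n" "Q * Q = Q"
    and r: "rk n P + rk n Q > n"
  shows "\<exists>v\<in>carrier_vec n. v \<noteq> 0\<^sub>v n \<and> P *\<^sub>v v = v \<and> Q *\<^sub>v v = v"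
proof -
  obtain BP where BP: "BP \<in> carrier_mat n (rk n P)" "set (cols BP) \<subseteq> set (cols P)"
      "\<forall>a\<in>carrier_vec (rk n P). BP *\<^sub>v a = 0\<^sub>v n \<longrightarrow> a = 0\<^sub>v (rk n P)"
    using range_basis[OF P(1)] by blast
  obtain BQ where BQ: "BQ \<in> carrier_mat n (rk n Q)" "set (cols BQ) \<subseteq> set (cols Q)"
      "\<forall>a\<in>carrier_vec (rk n Q). BQ *\<^sub>v a = 0\<^sub>v n \<longrightarrow> a = 0\<^sub>v (rk n Q)"
    using range_basis[OF Q(1)] by blast
  define r s where "r = rk n P" and "s = rk n Q"
  define M where "M = four_block_mat BP BQ (0\<^sub>m 0 r) (0\<^sub>m 0 s)"
  have Mc: "M \<in> carrier_mat n (r + s)" unfolding M_def using BP BQ r_def s_def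
    by (metis add_0_right four_block_carrier_mat zero_carrier_mat)
  obtain v where v: "v \<in> carrier_vec (r+s)" "v \<noteq> 0\<^sub>v (r+s)" "M *\<^sub>v v = 0\<^sub>v n"
    using wide_kernel[OF Mc] r r_def s_def by auto
  define a b where "a = vec_first v r" and "b = vec_last v s"
  have ab: "v = a @\<^sub>v b" using v(1) a_def b_def by simp
  have ac: "a \<in> carrier_vec r" and bc: "b \<in> carrier_vec s" using a_def b_def by auto
  have sum0: "BP *\<^sub>v a + BQ *\<^sub>v b = 0\<^sub>v n"
    using v(3) cat_mult[OF BP(1)[folded r_def] BQ(1)[folded s_def] ac bc] ab M_def by simp
  define x where "x = BP *\<^sub>v a"
  have xc: "x \<in> carrier_vec n" unfolding x_def using mult_mat_vec_carrier[OF BP(1) ac[unfolded r_def]] .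
  have bi: "BQ *\<^sub>v b = (-1) \<cdot>\<^sub>v x"
  proof (rule eq_vecI)
    fix i assume "i < dim_vec ((-1) \<cdot>\<^sub>v x)"
    hence i: "i < n" using xc by simp
    have "(BP *\<^sub>v a + BQ *\<^sub>v b) $ i = 0" using sum0 i by simp
    hence "(BP *\<^sub>v a) $ i + (BQ *\<^sub>v b) $ i = 0" using i BP(1) BQ(1) by simp
    hence e: "(BQ *\<^sub>v b) $ i = - (BP *\<^sub>v a) $ i" by (simp add: add_eq_0_iff)
    have d: "dim_vec (BP *\<^sub>v a) = n" using BP(1) by simp
    show "(BQ *\<^sub>v b) $ i = ((-1) \<cdot>\<^sub>v x) $ i" unfolding x_def
      using e i d index_smult_vec(1)[of i "BP *\<^sub>v a" "-1"] by simp
  qed (use xc BQ(1) in simp)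
  have x2: "x = BQ *\<^sub>v ((-1) \<cdot>\<^sub>v b)"
  proof -
    have "BQ *\<^sub>v ((-1) \<cdot>\<^sub>v b) = (-1) \<cdot>\<^sub>v (BQ *\<^sub>v b)" using mult_mat_vec BQ(1) bc s_def by metis
    also have "\<dots> = x" unfolding bi using xc by (intro eq_vecI) auto
    finally show ?thesis by simp
  qed
  have Px: "P *\<^sub>v x = x" unfolding x_def
    using assoc_mult_mat_vec[OF P(1) BP(1) ac[unfolded r_def], symmetric] col_proj[OF P BP(1) BP(2)] by simp
  have bc': "(-1) \<cdot>\<^sub>v b \<in> carrier_vec (rk n Q)" using bc s_def by simp
  have Qx: "Q *\<^sub>v x = x" unfolding x2
    using assoc_mult_mat_vec[OF Q(1) BQ(1) bc', symmetric] col_proj[OF Q BQ(1) BQ(2)] by simp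
  have "x \<noteq> 0\<^sub>v n"
  proof
    assume x0: "x = 0\<^sub>v n"
    hence a0: "a = 0\<^sub>v r" using BP(3) ac r_def x_def by auto
    have "BQ *\<^sub>v b = 0\<^sub>v n" using sum0 x0 x_def BQ(1) bc s_def by auto
    hence "b = 0\<^sub>v s" using BQ(3) bc s_def by auto
    hence "v = 0\<^sub>v (r+s)" using ab a0 by (auto intro!: eq_vecI)
    thus False using v(2) by simp
  qed
  thus ?thesis using xc Px Qx by blast
qed

lemma adj_index:
  fixes P :: "complex mat"
  assumes P: "P \<in> carrier_mat n n" and i: "i < n" and j: "j < n"
  shows "mat_adjoint P $$ (i,j) = cnj (P $$ (j,i))"
  using P i j by (simp add: mat_adjoint_def mat_of_rows_def)

lemma adj_carrier:
  fixes P :: "complex mat"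
  assumes P: "P \<in> carrier_mat n n"
  shows "mat_adjoint P \<in> carrier_mat n n"
  using P unfolding mat_adjoint_def by (metis carrier_matD(1,2) cols_length length_map mat_of_rows_carrier(1))

lemma herm:
  fixes P :: "complex mat"
  assumes P: "P \<in> carrier_mat n n" "mat_adjoint P = P" and i: "i < n" and j: "j < n"
  shows "P $$ (i,j) = cnj (P $$ (j,i))"
  using adj_index[OF P(1) i j] P(2) by simp

lemma adj_inner:
  fixes P :: "complex mat"
  assumes P: "P \<in> carrier_mat n n" "mat_adjoint P = P"
    and x: "x \<in> carrier_vec n" and y: "y \<in> carrier_vec n"
  shows "(P *\<^sub>v x) \<bullet>c y = x \<bullet>c (P *\<^sub>v y)"
proof -
  have "(P *\<^sub>v x) \<bullet>c y = (\<Sum>i<n. (\<Sum>j<n. P $$ (i,j) * x $ j) * cnj (y $ i))"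
    using P x y by (simp add: scalar_prod_def lessThan_atLeast0)
  also have "\<dots> = (\<Sum>i<n. \<Sum>j<n. P $$ (i,j) * x $ j * cnj (y $ i))"
    by (simp add: sum_distrib_right)
  also have "\<dots> = (\<Sum>j<n. \<Sum>i<n. P $$ (i,j) * x $ j * cnj (y $ i))"
    by (rule sum.swap)
  also have "\<dots> = (\<Sum>j<n. x $ j * (\<Sum>i<n. cnj (P $$ (j,i)) * cnj (y $ i)))"
  proof -
    have h: "\<And>i j. i<n \<Longrightarrow> j<n \<Longrightarrow> cnj (P $$ (j,i)) = P $$ (i,j)" using herm[OF P] by metis
    show ?thesis
    proof (rule sum.cong[OF refl])
      fix j assume j: "j \<in> {..<n}"
      show "(\<Sum>i<n. P $$ (i,j) * x $ j * cnj (y $ i)) = x $ j * (\<Sum>i<n. cnj (P $$ (j,i)) * cnj (y $ i))"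
        unfolding sum_distrib_left using j by (intro sum.cong refl) (simp add: h algebra_simps)
    qed
  qed
  also have "\<dots> = (\<Sum>j<n. x $ j * cnj (\<Sum>i<n. P $$ (j,i) * y $ i))"
    by (simp add: cnj_sum)
  also have "\<dots> = x \<bullet>c (P *\<^sub>v y)"
    using P x y by (simp add: scalar_prod_def lessThan_atLeast0)
  finally show ?thesis .
qed

lemma proj_self:
  fixes P :: "complex mat"
  assumes P: "P \<in> carrier_mat n n" "P * P = P" "mat_adjoint P = P"
    and x: "x \<in> carrier_vec n"
  shows "(P *\<^sub>v x) \<bullet>c x = (P *\<^sub>v x) \<bullet>c (P *\<^sub>v x)"
proof -
  have "(P *\<^sub>v x) \<bullet>c (P *\<^sub>v x) = (P *\<^sub>v (P *\<^sub>v x)) \<bullet>c x"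
    using adj_inner[OF P(1,3) _ x, of "P *\<^sub>v x"] P(1) x by simp
  also have "P *\<^sub>v (P *\<^sub>v x) = P *\<^sub>v x" using P x by (metis assoc_mult_mat_vec)
  finally show ?thesis by simp
qed

lemma proj_sum_zero:
  fixes P Q :: "complex mat"
  assumes P: "P \<in> carrier_mat n n" "P * P = P" "mat_adjoint P = P"
    and Q: "Q \<in> carrier_mat n n" "Q * Q = Q" "mat_adjoint Q = Q"
    and x: "x \<in> carrier_vec n" and z: "(P + Q) *\<^sub>v x = 0\<^sub>v n"
  shows "P *\<^sub>v x = 0\<^sub>v n \<and> Q *\<^sub>v x = 0\<^sub>v n"
proof -
  have Pc: "P *\<^sub>v x \<in> carrier_vec n" and Qc: "Q *\<^sub>v x \<in> carrier_vec n" using P Q x by auto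
  have "0 = ((P + Q) *\<^sub>v x) \<bullet>c x" using z x by simp
  also have "\<dots> = (P *\<^sub>v x) \<bullet>c x + (Q *\<^sub>v x) \<bullet>c x"
    using P Q x by (simp add: add_mult_distrib_mat_vec add_scalar_prod_distrib[of _ n])
  also have "\<dots> = (P *\<^sub>v x) \<bullet>c (P *\<^sub>v x) + (Q *\<^sub>v x) \<bullet>c (Q *\<^sub>v x)"
    using proj_self[OF P x] proj_self[OF Q x] by simp
  finally have "(P *\<^sub>v x) \<bullet>c (P *\<^sub>v x) = 0 \<and> (Q *\<^sub>v x) \<bullet>c (Q *\<^sub>v x) = 0"
    using conjugate_square_ge_0_vec[of "P *\<^sub>v x"] conjugate_square_ge_0_vec[of "Q *\<^sub>v x"]
    by (metis add_nonneg_eq_0_iff)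
  thus ?thesis using Pc Qc by simp
qed

lemma rank_one: "rk n (1\<^sub>m n :: complex mat) = n"
  unfolding rk_def using vec_space.det_rank_iff[of "1\<^sub>m n :: complex mat" n] by simp

lemma compl_idem:
  fixes P :: "complex mat"
  assumes P: "P \<in> carrier_mat n n" "P * P = P"
  shows "(1\<^sub>m n - P) * (1\<^sub>m n - P) = 1\<^sub>m n - P"
proof -
  have "(1\<^sub>m n - P) * (1\<^sub>m n - P) = 1\<^sub>m n * (1\<^sub>m n - P) - P * (1\<^sub>m n - P)"
    by (rule minus_mult_distrib_mat) (use P in auto)
  also have "P * (1\<^sub>m n - P) = P * 1\<^sub>m n - P * P"
    by (rule mult_minus_distrib_mat) (use P in auto)
  finally show ?thesis using P by (intro eq_matI) auto
qed

lemma compl_adj: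
  fixes P :: "complex mat"
  assumes P: "P \<in> carrier_mat n n" "mat_adjoint P = P"
  shows "mat_adjoint (1\<^sub>m n - P) = 1\<^sub>m n - P"
proof -
  have c: "1\<^sub>m n - P \<in> carrier_mat n n" using P by auto
  have ca: "mat_adjoint (1\<^sub>m n - P) \<in> carrier_mat n n" using adj_carrier[OF c] .
  show ?thesis
  proof (rule eq_matI)
    fix i j assume "i < dim_row (1\<^sub>m n - P)" "j < dim_col (1\<^sub>m n - P)"
    hence ij: "i < n" "j < n" using P by auto
    show "mat_adjoint (1\<^sub>m n - P) $$ (i, j) = (1\<^sub>m n - P) $$ (i, j)"
      using adj_index[OF c ij] herm[OF P ij] P ij by auto
  qed (use ca c in auto)
qed

lemma rank_compl:
  fixes P :: "complex mat"
  assumes P: "P \<in> carrier_mat n n" "P * P = P"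
  shows "rk n (1\<^sub>m n - P) + rk n P = n"
proof (rule antisym)
  have "(1\<^sub>m n - P) + P = 1\<^sub>m n" using P by (intro eq_matI) auto
  thus "n \<le> rk n (1\<^sub>m n - P) + rk n P"
    using vec_space.rank_subadditive[of "1\<^sub>m n - P" n n P] P rank_one[of n] unfolding rk_def
    by (metis minus_carrier_mat one_carrier_mat)
  show "rk n (1\<^sub>m n - P) + rk n P \<le> n"
  proof (rule ccontr)
    assume "\<not> ?thesis"
    then obtain v where v: "v \<in> carrier_vec n" "v \<noteq> 0\<^sub>v n" "(1\<^sub>m n - P) *\<^sub>v v = v" "P *\<^sub>v v = v"
      using D1[OF minus_carrier_mat[OF P(1)] compl_idem[OF P] P] by auto
    have "(1\<^sub>m n - P) *\<^sub>v v = v - P *\<^sub>v v" using minus_mult_distrib_mat_vec[OF one_carrier_mat P(1) v(1)] v(1) by simp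
    hence "v = 0\<^sub>v n" using v by auto
    thus False using v(2) by simp
  qed
qed



lemma ip_add_left:
  fixes v1 v2 w :: "complex vec"
  assumes "v1 \<in> carrier_vec n" "v2 \<in> carrier_vec n" "w \<in> carrier_vec n"
  shows "(v1 + v2) \<bullet>c w = v1 \<bullet>c w + v2 \<bullet>c w"
  by (rule add_scalar_prod_distrib[of _ n]) (use assms in auto)

lemma ip_add_right:
  fixes v w1 w2 :: "complex vec"
  assumes "v \<in> carrier_vec n" "w1 \<in> carrier_vec n" "w2 \<in> carrier_vec n"
  shows "v \<bullet>c (w1 + w2) = v \<bullet>c w1 + v \<bullet>c w2"
  using assms by (simp add: conjugate_add_vec[of _ n] scalar_prod_add_distrib[of _ n])

lemma ip_minus_left:
  fixes v1 v2 w :: "complex vec"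
  assumes "v1 \<in> carrier_vec n" "v2 \<in> carrier_vec n" "w \<in> carrier_vec n"
  shows "(v1 - v2) \<bullet>c w = v1 \<bullet>c w - v2 \<bullet>c w"
  by (rule minus_scalar_prod_distrib[of _ n]) (use assms in auto)

lemma ip_smult_left:
  fixes v w :: "complex vec"
  assumes "v \<in> carrier_vec n" "w \<in> carrier_vec n"
  shows "(a \<cdot>\<^sub>v v) \<bullet>c w = a * (v \<bullet>c w)"
  using assms by simp

lemma ip_zero_right:
  fixes v :: "complex vec"
  assumes "v \<in> carrier_vec n"
  shows "v \<bullet>c 0\<^sub>v n = 0"
  using assms by simp

lemma ip_zero_left:
  fixes v :: "complex vec"
  assumes "v \<in> carrier_vec n"
  shows "0\<^sub>v n \<bullet>c v = 0"
  using assms by simp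

lemma finish:
  fixes P Q BP BQ :: "complex mat"
  assumes P: "P \<in> carrier_mat n n" and PB: "P * BP = BP" and BP: "BP \<in> carrier_mat n r"
    and kP: "\<forall>a\<in>carrier_vec r. BP *\<^sub>v a = 0\<^sub>v n \<longrightarrow> a = 0\<^sub>v r"
    and Q: "Q \<in> carrier_mat n n" and QB: "Q * BQ = BQ" and BQ: "BQ \<in> carrier_mat n s"
    and kQ: "\<forall>a\<in>carrier_vec s. BQ *\<^sub>v a = 0\<^sub>v n \<longrightarrow> a = 0\<^sub>v s"
    and ac: "a \<in> carrier_vec r" and bc: "b \<in> carrier_vec s"
    and sum0: "BP *\<^sub>v a + BQ *\<^sub>v b = 0\<^sub>v n"
    and nz: "a \<noteq> 0\<^sub>v r \<or> b \<noteq> 0\<^sub>v s"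
  shows "\<exists>v\<in>carrier_vec n. v \<noteq> 0\<^sub>v n \<and> P *\<^sub>v v = v \<and> Q *\<^sub>v v = v"
proof -
  define x where "x = BP *\<^sub>v a"
  have xc: "x \<in> carrier_vec n" unfolding x_def using mult_mat_vec_carrier[OF BP ac] .
  have bi: "BQ *\<^sub>v b = (-1) \<cdot>\<^sub>v x"
  proof (rule eq_vecI)
    fix i assume "i < dim_vec ((-1) \<cdot>\<^sub>v x)"
    hence i: "i < n" using xc by simp
    have "(BP *\<^sub>v a + BQ *\<^sub>v b) $ i = 0" using sum0 i by simp
    hence "(BP *\<^sub>v a) $ i + (BQ *\<^sub>v b) $ i = 0" using i BP BQ by simp
    hence e: "(BQ *\<^sub>v b) $ i = - (BP *\<^sub>v a) $ i" by (simp add: add_eq_0_iff)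
    have d: "dim_vec (BP *\<^sub>v a) = n" using BP by simp
    show "(BQ *\<^sub>v b) $ i = ((-1) \<cdot>\<^sub>v x) $ i" unfolding x_def
      using e i d index_smult_vec(1)[of i "BP *\<^sub>v a" "-1"] by simp
  qed (use xc BQ in simp)
  have x2: "x = BQ *\<^sub>v ((-1) \<cdot>\<^sub>v b)"
  proof -
    have "BQ *\<^sub>v ((-1) \<cdot>\<^sub>v b) = (-1) \<cdot>\<^sub>v (BQ *\<^sub>v b)" using mult_mat_vec BQ bc by metis
    also have "\<dots> = x" unfolding bi using xc by (intro eq_vecI) auto
    finally show ?thesis by simp
  qed
  have Px: "P *\<^sub>v x = x" unfolding x_def
    using assoc_mult_mat_vec[OF P BP ac, symmetric] PB by simp
  have bc': "(-1) \<cdot>\<^sub>v b \<in> carrier_vec s" using bc by simp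
  have Qx: "Q *\<^sub>v x = x" unfolding x2
    using assoc_mult_mat_vec[OF Q BQ bc', symmetric] QB by simp
  have "x \<noteq> 0\<^sub>v n"
  proof
    assume x0: "x = 0\<^sub>v n"
    hence a0: "a = 0\<^sub>v r" using kP ac x_def by auto
    have "BQ *\<^sub>v b = 0\<^sub>v n" using bi x0 by auto
    hence "b = 0\<^sub>v s" using kQ bc by auto
    thus False using a0 nz by simp
  qed
  thus ?thesis using xc Px Qx by blast
qed

lemma D2:
  fixes P Q :: "complex mat"
  assumes P: "P \<in> carrier_mat n n" "P * P = P" "mat_adjoint P = P"
    and Q: "Q \<in> carrier_mat n n" "Q * Q = Q" "mat_adjoint Q = Q"
    and r: "n \<le> rk n P + rk n Q"
    and w: "w \<in> carrier_vec n" "w \<noteq> 0\<^sub>v n" "P *\<^sub>v w = 0\<^sub>v n" "Q *\<^sub>v w = 0\<^sub>v n"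
  shows "\<exists>v\<in>carrier_vec n. v \<noteq> 0\<^sub>v n \<and> P *\<^sub>v v = v \<and> Q *\<^sub>v v = v"
proof -
  define r s where "r = rk n P" and "s = rk n Q"
  obtain BP where BP: "BP \<in> carrier_mat n r" "set (cols BP) \<subseteq> set (cols P)"
      "\<forall>a\<in>carrier_vec r. BP *\<^sub>v a = 0\<^sub>v n \<longrightarrow> a = 0\<^sub>v r"
    using range_basis[OF P(1)] r_def by blast
  obtain BQ where BQ: "BQ \<in> carrier_mat n s" "set (cols BQ) \<subseteq> set (cols Q)"
      "\<forall>a\<in>carrier_vec s. BQ *\<^sub>v a = 0\<^sub>v n \<longrightarrow> a = 0\<^sub>v s"
    using range_basis[OF Q(1)] s_def by blast
  have PB: "P * BP = BP" using col_proj[OF P(1,2) BP(1,2)] .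
  have QB: "Q * BQ = BQ" using col_proj[OF Q(1,2) BQ(1,2)] .
  define W where "W = mat n 1 (\<lambda>(i,j). w $ i)"
  have Wc: "W \<in> carrier_mat n 1" unfolding W_def by simp
  define BQ' where "BQ' = four_block_mat BQ W (0\<^sub>m 0 s) (0\<^sub>m 0 1)"
  have BQ'c: "BQ' \<in> carrier_mat n (s+1)" unfolding BQ'_def using BQ(1) Wc
    by (metis add_0_right four_block_carrier_mat zero_carrier_mat)
  define M where "M = four_block_mat BP BQ' (0\<^sub>m 0 r) (0\<^sub>m 0 (s+1))"
  have Mc: "M \<in> carrier_mat n (r + (s+1))" unfolding M_def using BP(1) BQ'c
    by (metis add_0_right four_block_carrier_mat zero_carrier_mat)
  obtain v where v: "v \<in> carrier_vec (r+(s+1))" "v \<noteq> 0\<^sub>v (r+(s+1))" "M *\<^sub>v v = 0\<^sub>v n"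
    using wide_kernel[OF Mc] r r_def s_def by auto
  define a b' where "a = vec_first v r" and "b' = vec_last v (s+1)"
  have ab: "v = a @\<^sub>v b'" using v(1) a_def b'_def by simp
  define b t where "b = vec_first b' s" and "t = vec_last b' 1"
  have bt: "b' = b @\<^sub>v t" using b_def t_def b'_def by simp
  have ac: "a \<in> carrier_vec r" and bc: "b \<in> carrier_vec s" and tc: "t \<in> carrier_vec 1"
    using a_def b_def t_def by auto
  have Wt: "W *\<^sub>v t = (t $ 0) \<cdot>\<^sub>v w"
    by (rule eq_vecI) (use w(1) tc in \<open>auto simp: W_def scalar_prod_def\<close>)
  define y z where "y = BP *\<^sub>v a" and "z = BQ *\<^sub>v b"
  have yc: "y \<in> carrier_vec n" and zc: "z \<in> carrier_vec n" using y_def z_def BP(1) BQ(1) ac bc by auto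
  have b'c: "b' \<in> carrier_vec (s+1)" using b'_def by simp
  have c1: "M *\<^sub>v v = BP *\<^sub>v a + BQ' *\<^sub>v b'" unfolding M_def ab by (rule cat_mult[OF BP(1) BQ'c ac b'c])
  have c2: "BQ' *\<^sub>v b' = BQ *\<^sub>v b + W *\<^sub>v t" unfolding BQ'_def bt by (rule cat_mult[OF BQ(1) Wc bc tc])
  have sum1: "y + (z + (t $ 0) \<cdot>\<^sub>v w) = 0\<^sub>v n"
    using v(3) c1 c2 Wt y_def z_def by simp
  have Py: "P *\<^sub>v y = y" unfolding y_def using assoc_mult_mat_vec[OF P(1) BP(1) ac, symmetric] PB by simp
  have Qz: "Q *\<^sub>v z = z" unfolding z_def using assoc_mult_mat_vec[OF Q(1) BQ(1) bc, symmetric] QB by simp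
  have yw: "y \<bullet>c w = 0"
    using adj_inner[OF P(1,3) yc w(1)] Py w(3) ip_zero_right[OF yc] by simp
  have zw: "z \<bullet>c w = 0"
    using adj_inner[OF Q(1,3) zc w(1)] Qz w(4) ip_zero_right[OF zc] by simp
  have "0 = (y + (z + (t $ 0) \<cdot>\<^sub>v w)) \<bullet>c w" unfolding sum1 using ip_zero_left[OF w(1)] by simp
  also have "\<dots> = y \<bullet>c w + (z \<bullet>c w + (t $ 0) * (w \<bullet>c w))"
    using yc zc w(1) by (simp add: ip_add_left[of _ n])
  finally have "(t $ 0) * (w \<bullet>c w) = 0" using yw zw by simp
  moreover have "w \<bullet>c w \<noteq> 0" using w(1,2) by simp
  ultimately have t0: "t $ 0 = 0" by simp
  hence t00: "t = 0\<^sub>v 1" using tc by (intro eq_vecI) auto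
  have tw: "(t $ 0) \<cdot>\<^sub>v w = 0\<^sub>v n" using t0 w(1) by (intro eq_vecI) auto
  have "y + z = 0\<^sub>v n" using sum1 right_zero_vec[OF zc] unfolding tw by simp
  hence sum0: "BP *\<^sub>v a + BQ *\<^sub>v b = 0\<^sub>v n" unfolding y_def z_def .
  have nz: "a \<noteq> 0\<^sub>v r \<or> b \<noteq> 0\<^sub>v s"
  proof (rule ccontr)
    assume "\<not> ?thesis"
    hence "v = 0\<^sub>v (r + (s+1))" unfolding ab bt t00 by (intro eq_vecI) auto
    thus False using v(2) by simp
  qed
  show ?thesis using finish[OF P(1) PB BP(1) BP(3) Q(1) QB BQ(1) BQ(3) ac bc sum0 nz] .
qed

lemma D2':
  fixes P Q :: "complex mat"
  assumes P: "P \<in> carrier_mat n n" "P * P = P" "mat_adjoint P = P"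
    and Q: "Q \<in> carrier_mat n n" "Q * Q = Q" "mat_adjoint Q = Q"
    and r: "rk n P + rk n Q \<le> n"
    and v: "v \<in> carrier_vec n" "v \<noteq> 0\<^sub>v n" "P *\<^sub>v v = v" "Q *\<^sub>v v = v"
  shows "\<exists>w\<in>carrier_vec n. w \<noteq> 0\<^sub>v n \<and> P *\<^sub>v w = 0\<^sub>v n \<and> Q *\<^sub>v w = 0\<^sub>v n"
proof -
  have P': "1\<^sub>m n - P \<in> carrier_mat n n" "(1\<^sub>m n - P) * (1\<^sub>m n - P) = 1\<^sub>m n - P"
      "mat_adjoint (1\<^sub>m n - P) = 1\<^sub>m n - P"
    using P compl_idem compl_adj by auto
  have Q': "1\<^sub>m n - Q \<in> carrier_mat n n" "(1\<^sub>m n - Q) * (1\<^sub>m n - Q) = 1\<^sub>m n - Q"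
      "mat_adjoint (1\<^sub>m n - Q) = 1\<^sub>m n - Q"
    using Q compl_idem compl_adj by auto
  have r': "n \<le> rk n (1\<^sub>m n - P) + rk n (1\<^sub>m n - Q)"
    using rank_compl[OF P(1,2)] rank_compl[OF Q(1,2)] r by linarith
  have mv: "(1\<^sub>m n - A) *\<^sub>v x = x - A *\<^sub>v x" if A: "A \<in> carrier_mat n n" and x: "x \<in> carrier_vec n" for A :: "complex mat" and x
    using minus_mult_distrib_mat_vec[OF one_carrier_mat A x] x by simp
  have "(1\<^sub>m n - P) *\<^sub>v v = 0\<^sub>v n" "(1\<^sub>m n - Q) *\<^sub>v v = 0\<^sub>v n"
    using mv[OF P(1) v(1)] mv[OF Q(1) v(1)] v by auto
  then obtain w where w: "w \<in> carrier_vec n" "w \<noteq> 0\<^sub>v n" "(1\<^sub>m n - P) *\<^sub>v w = w" "(1\<^sub>m n - Q) *\<^sub>v w = w"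
    using D2[OF P' Q' r' v(1,2)] by blast
  have z: "\<And>A. A \<in> carrier_mat n n \<Longrightarrow> (1\<^sub>m n - A) *\<^sub>v w = w \<Longrightarrow> A *\<^sub>v w = 0\<^sub>v n"
  proof -
    fix A :: "complex mat" assume A: "A \<in> carrier_mat n n" and e: "(1\<^sub>m n - A) *\<^sub>v w = w"
    hence e2: "w - A *\<^sub>v w = w" using mv[OF A w(1)] by simp
    show "A *\<^sub>v w = 0\<^sub>v n"
    proof (rule eq_vecI)
      fix i assume "i < dim_vec (0\<^sub>v n :: complex vec)"
      hence i: "i < n" by simp
      have "(w - A *\<^sub>v w) $ i = w $ i" using e2 by simp
      thus "(A *\<^sub>v w) $ i = 0\<^sub>v n $ i" using i A w(1) by simp
    qed (use A in simp)
  qed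
  show ?thesis using z[OF P(1) w(3)] z[OF Q(1) w(4)] w(1,2) by blast
qed



lemma sum4: "(\<Sum>i\<in>{1..4::nat}. f i) = f 1 + f 2 + f 3 + f (4::nat)"
  by (simp add: eval_nat_numeral atLeastAtMostSuc_conv add_ac)

lemma hat_inner4: "hat_inner h g = h 1 \<bullet>c g 1 + h 2 \<bullet>c g 2 + h 3 \<bullet>c g 3 + h 4 \<bullet>c g 4"
  unfolding hat_inner_def by (rule sum4)

lemma in14: "(i::nat) \<in> {1..4} \<longleftrightarrow> i = 1 \<or> i = 2 \<or> i = 3 \<or> i = 4" by auto

lemma veq: "u \<in> carrier_vec n \<Longrightarrow> v \<in> carrier_vec n \<Longrightarrow> u = v \<longleftrightarrow> (\<forall>j<n. u $ j = v $ j)"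
  by (auto intro: eq_vecI)

definition inK :: "nat \<Rightarrow> (nat \<Rightarrow> complex mat) \<Rightarrow> (nat \<Rightarrow> complex vec) \<Rightarrow> bool" where
  "inK n P k \<longleftrightarrow> k 1 \<in> carrier_vec n \<and> k 2 \<in> carrier_vec n \<and> k 3 \<in> carrier_vec n \<and> k 4 \<in> carrier_vec n
     \<and> P 1 *\<^sub>v k 1 = k 1 \<and> P 2 *\<^sub>v k 2 = k 2 \<and> P 3 *\<^sub>v k 3 = k 3 \<and> P 4 *\<^sub>v k 4 = k 4
     \<and> (\<forall>i. i \<notin> {1..4} \<longrightarrow> k i = 0\<^sub>v n) \<and> k 1 + k 2 + k 3 + k 4 = 0\<^sub>v n"

definition mk :: "nat \<Rightarrow> complex vec \<Rightarrow> complex vec \<Rightarrow> complex vec \<Rightarrow> complex vec \<Rightarrow> nat \<Rightarrow> complex vec" where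
  "mk n k1 k2 k3 k4 = (\<lambda>i. if i = 1 then k1 else if i = 2 then k2 else if i = 3 then k3 else if i = 4 then k4 else 0\<^sub>v n)"

lemma mk_simps[simp]: "mk n k1 k2 k3 k4 1 = k1" "mk n k1 k2 k3 k4 2 = k2" "mk n k1 k2 k3 k4 3 = k3"
  "mk n k1 k2 k3 k4 4 = k4" "mk n k1 k2 k3 k4 (Suc 0) = k1" by (auto simp: mk_def)

lemma inK_mk: "inK n P (mk n k1 k2 k3 k4) \<longleftrightarrow> k1 \<in> carrier_vec n \<and> k2 \<in> carrier_vec n \<and> k3 \<in> carrier_vec n \<and> k4 \<in> carrier_vec n
     \<and> P 1 *\<^sub>v k1 = k1 \<and> P 2 *\<^sub>v k2 = k2 \<and> P 3 *\<^sub>v k3 = k3 \<and> P 4 *\<^sub>v k4 = k4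
     \<and> k1 + k2 + k3 + k4 = 0\<^sub>v n"
  unfolding inK_def by (auto simp: mk_def)

lemma rep_proj:
  assumes "is_rep n \<alpha> P" "i \<in> {1..4}"
  shows "P i \<in> carrier_mat n n" "P i * P i = P i" "mat_adjoint (P i) = P i"
  using assms unfolding is_rep_def by auto

lemma rep_vec:
  assumes rep: "is_rep n \<alpha> P" and x: "x \<in> carrier_vec n"
  shows "P 1 *\<^sub>v x + P 2 *\<^sub>v x + P 3 *\<^sub>v x + P 4 *\<^sub>v x = of_real \<alpha> \<cdot>\<^sub>v x"
proof -
  have c1: "P 1 \<in> carrier_mat n n" and c2: "P 2 \<in> carrier_mat n n" and c3: "P 3 \<in> carrier_mat n n"
    and c4: "P 4 \<in> carrier_mat n n" using rep_proj[OF rep] by auto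
  have s: "P 1 + P 2 + P 3 + P 4 = of_real \<alpha> \<cdot>\<^sub>m 1\<^sub>m n" using rep unfolding is_rep_def by simp
  have c12: "P 1 + P 2 \<in> carrier_mat n n" and c123: "P 1 + P 2 + P 3 \<in> carrier_mat n n" using c1 c2 c3 by auto
  have "(P 1 + P 2 + P 3 + P 4) *\<^sub>v x = P 1 *\<^sub>v x + P 2 *\<^sub>v x + P 3 *\<^sub>v x + P 4 *\<^sub>v x"
    using add_mult_distrib_mat_vec[OF c123 c4 x] add_mult_distrib_mat_vec[OF c12 c3 x]
      add_mult_distrib_mat_vec[OF c1 c2 x] by simp
  moreover have "(of_real \<alpha> \<cdot>\<^sub>m 1\<^sub>m n) *\<^sub>v x = (of_real \<alpha> :: complex) \<cdot>\<^sub>v x"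
    by (rule eq_vecI) (use x in auto)
  ultimately show ?thesis using s by simp
qed

lemma rep_vec_entry:
  assumes rep: "is_rep n \<alpha> P" and x: "x \<in> carrier_vec n" and j: "j < n"
  shows "(P 1 *\<^sub>v x) $ j + (P 2 *\<^sub>v x) $ j + (P 3 *\<^sub>v x) $ j + (P 4 *\<^sub>v x) $ j = of_real \<alpha> * x $ j"
proof -
  have c1: "P 1 \<in> carrier_mat n n" and c2: "P 2 \<in> carrier_mat n n" and c3: "P 3 \<in> carrier_mat n n"
    and c4: "P 4 \<in> carrier_mat n n" using rep_proj[OF rep] by auto
  have "(P 1 *\<^sub>v x + P 2 *\<^sub>v x + P 3 *\<^sub>v x + P 4 *\<^sub>v x) $ j = (of_real \<alpha> \<cdot>\<^sub>v x) $ j"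
    using rep_vec[OF rep x] by simp
  thus ?thesis using c1 c2 c3 c4 x j by simp
qed

lemma ranM_iff:
  fixes A :: "complex mat"
  assumes A: "A \<in> carrier_mat n n" "A * A = A"
  shows "v \<in> ranM n A \<longleftrightarrow> v \<in> carrier_vec n \<and> A *\<^sub>v v = v"
proof
  assume "v \<in> ranM n A"
  then obtain y where y: "y \<in> carrier_vec n" "v = A *\<^sub>v y" unfolding ranM_def by auto
  have "A *\<^sub>v v = (A * A) *\<^sub>v y" using y A(1) by (simp add: assoc_mult_mat_vec)
  thus "v \<in> carrier_vec n \<and> A *\<^sub>v v = v" using A y by auto
next
  assume h: "v \<in> carrier_vec n \<and> A *\<^sub>v v = v"
  hence "v = A *\<^sub>v v \<and> v \<in> carrier_vec n" by simp
  thus "v \<in> ranM n A" unfolding ranM_def by blast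
qed



lemma mv_zero: "A \<in> carrier_mat n n \<Longrightarrow> A *\<^sub>v 0\<^sub>v n = (0\<^sub>v n :: complex vec)"
  by (intro eq_vecI) auto

lemma K_char:
  assumes rep: "is_rep n \<alpha> P" and a: "\<alpha> > 0"
  shows "k \<in> hat_K n \<alpha> P \<longleftrightarrow> inK n P k"
proof
  assume "k \<in> hat_K n \<alpha> P"
  then obtain h where kh: "k = (\<lambda>i. h i - hat_u n \<alpha> P (hat_u_adj \<alpha> h) i)" and h: "h \<in> hat_space n P"
    unfolding hat_K_def by blast
  have hP: "h i \<in> carrier_vec n \<and> P i *\<^sub>v h i = h i" if "i \<in> {1..4}" for i
  proof -
    have "h i \<in> ranM n (P i)" using h that unfolding hat_space_def by blast
    thus ?thesis using ranM_iff[OF rep_proj(1,2)[OF rep that]] by blast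
  qed
  have h0: "h i = 0\<^sub>v n" if "i \<notin> {1..4}" for i using h that unfolding hat_space_def by blast
  have hc: "h 1 \<in> carrier_vec n" "h 2 \<in> carrier_vec n" "h 3 \<in> carrier_vec n" "h 4 \<in> carrier_vec n"
    using hP by auto
  define s where "s = h 1 + h 2 + h 3 + h 4"
  define \<tau> where "\<tau> = (complex_of_real (1/\<alpha>))"
  have sc: "s \<in> carrier_vec n" using hc s_def by auto
  have sq: "complex_of_real (1/sqrt \<alpha>) * complex_of_real (1/sqrt \<alpha>) = \<tau>"
  proof -
    have "(1/sqrt \<alpha>) * (1/sqrt \<alpha>) = 1/\<alpha>" using a by (simp add: real_sqrt_mult_self)
    thus ?thesis unfolding \<tau>_def by (metis of_real_mult)
  qed
  have ki: "k i = h i - \<tau> \<cdot>\<^sub>v (P i *\<^sub>v s)" if i: "i \<in> {1..4}" for i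
  proof -
    have Pc: "P i \<in> carrier_mat n n" using rep_proj[OF rep i] by simp
    have "hat_u n \<alpha> P (hat_u_adj \<alpha> h) i = complex_of_real (1/sqrt \<alpha>) \<cdot>\<^sub>v (P i *\<^sub>v (complex_of_real (1/sqrt \<alpha>) \<cdot>\<^sub>v s))"
      using i unfolding hat_u_def hat_u_adj_def s_def by simp
    also have "\<dots> = \<tau> \<cdot>\<^sub>v (P i *\<^sub>v s)" unfolding mult_mat_vec[OF Pc sc] sq[symmetric]
      using Pc sc by (intro eq_vecI) auto
    finally show ?thesis using kh by simp
  qed
  have kP: "k i \<in> carrier_vec n \<and> P i *\<^sub>v k i = k i" if i: "i \<in> {1..4}" for i
  proof -
    have Pc: "P i \<in> carrier_mat n n" and PP: "P i * P i = P i" using rep_proj[OF rep i] by auto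
    have Psc: "P i *\<^sub>v s \<in> carrier_vec n" using Pc sc by simp
    have "P i *\<^sub>v k i = P i *\<^sub>v h i - P i *\<^sub>v (\<tau> \<cdot>\<^sub>v (P i *\<^sub>v s))"
      unfolding ki[OF i] using mult_minus_distrib_mat_vec[OF Pc _ _] hP[OF i] Psc by auto
    also have "P i *\<^sub>v (\<tau> \<cdot>\<^sub>v (P i *\<^sub>v s)) = \<tau> \<cdot>\<^sub>v (P i *\<^sub>v (P i *\<^sub>v s))"
      using mult_mat_vec[OF Pc Psc] .
    also have "P i *\<^sub>v (P i *\<^sub>v s) = P i *\<^sub>v s" using assoc_mult_mat_vec[OF Pc Pc sc] PP by simp
    finally show ?thesis using ki[OF i] hP[OF i] Psc by auto
  qed
  have kout: "k i = 0\<^sub>v n" if i: "i \<notin> {1..4}" for i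
    using kh h0[OF i] i unfolding hat_u_def by auto
  have ksum: "k 1 + k 2 + k 3 + k 4 = 0\<^sub>v n"
  proof -
    have kc: "k 1 \<in> carrier_vec n" "k 2 \<in> carrier_vec n" "k 3 \<in> carrier_vec n" "k 4 \<in> carrier_vec n"
      using kP by auto
    have c: "P 1 \<in> carrier_mat n n" "P 2 \<in> carrier_mat n n" "P 3 \<in> carrier_mat n n" "P 4 \<in> carrier_mat n n"
      using rep_proj[OF rep] by auto
    show ?thesis
    proof (rule eq_vecI)
      fix j assume "j < dim_vec (0\<^sub>v n :: complex vec)"
      hence j: "j < n" by simp
      have e: "(P 1 *\<^sub>v s) $ j + (P 2 *\<^sub>v s) $ j + (P 3 *\<^sub>v s) $ j + (P 4 *\<^sub>v s) $ j = of_real \<alpha> * s $ j"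
        using rep_vec_entry[OF rep sc j] .
      have kj: "(k i) $ j = h i $ j - \<tau> * (P i *\<^sub>v s) $ j" if i: "i \<in> {1..4}" for i
        using ki[OF i] hP[OF i] rep_proj(1)[OF rep i] sc j by simp
      have sj: "s $ j = h 1 $ j + h 2 $ j + h 3 $ j + h 4 $ j" using hc j s_def by simp
      have "(k 1 + k 2 + k 3 + k 4) $ j = k 1 $ j + k 2 $ j + k 3 $ j + k 4 $ j" using kc j by simp
      also have "\<dots> = s $ j - \<tau> * ((P 1 *\<^sub>v s) $ j + (P 2 *\<^sub>v s) $ j + (P 3 *\<^sub>v s) $ j + (P 4 *\<^sub>v s) $ j)"
      proof -
        have k1: "k 1 $ j = h 1 $ j - \<tau> * (P 1 *\<^sub>v s) $ j" by (rule kj) simp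
        have k2: "k 2 $ j = h 2 $ j - \<tau> * (P 2 *\<^sub>v s) $ j" by (rule kj) simp
        have k3: "k 3 $ j = h 3 $ j - \<tau> * (P 3 *\<^sub>v s) $ j" by (rule kj) simp
        have k4: "k 4 $ j = h 4 $ j - \<tau> * (P 4 *\<^sub>v s) $ j" by (rule kj) simp
        show ?thesis unfolding k1 k2 k3 k4 sj by (simp add: algebra_simps)
      qed
      also have "\<dots> = 0" unfolding e \<tau>_def using a sc j by simp
      finally show "(k 1 + k 2 + k 3 + k 4) $ j = 0\<^sub>v n $ j" using j by simp
    qed (use kP in auto)
  qed
  show "inK n P k" unfolding inK_def using kP kout ksum by auto
next
  assume k: "inK n P k"
  have kc: "k i \<in> carrier_vec n" for i using k unfolding inK_def by (metis carrier_vecI dim_vec in14 zero_carrier_vec)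
  have hs: "k \<in> hat_space n P"
    unfolding hat_space_def
  proof (intro CollectI conjI allI impI ballI)
    fix i :: nat assume i: "i \<in> {1..4}"
    hence "i = 1 \<or> i = 2 \<or> i = 3 \<or> i = 4" by auto
    hence "k i \<in> carrier_vec n \<and> P i *\<^sub>v k i = k i" by (elim disjE) (use k in \<open>auto simp: inK_def\<close>)
    thus "k i \<in> ranM n (P i)" using ranM_iff[OF rep_proj(1,2)[OF rep i]] by blast
  next
    fix i :: nat assume "i \<notin> {1..4}" thus "k i = 0\<^sub>v n" using k unfolding inK_def by auto
  qed
  have adj0: "hat_u_adj \<alpha> k = 0\<^sub>v n" using k unfolding hat_u_adj_def inK_def by auto
  have u0: "hat_u n \<alpha> P (0\<^sub>v n) i = 0\<^sub>v n" for i
    unfolding hat_u_def using mv_zero[OF rep_proj(1)[OF rep]] by auto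
  have "k = (\<lambda>i. k i - hat_u n \<alpha> P (hat_u_adj \<alpha> k) i)" unfolding adj0 u0 using kc by auto
  thus "k \<in> hat_K n \<alpha> P" unfolding hat_K_def using hs by blast
qed



lemma dlem:
  fixes A :: "complex mat"
  assumes A: "A \<in> carrier_mat n n" "A * A = A" and g: "g \<in> carrier_vec n" "A *\<^sub>v g = g"
    and x: "x \<in> carrier_vec n"
  shows "A *\<^sub>v (g - A *\<^sub>v x) = g - A *\<^sub>v x"
proof -
  have "A *\<^sub>v (g - A *\<^sub>v x) = A *\<^sub>v g - A *\<^sub>v (A *\<^sub>v x)"
    using mult_minus_distrib_mat_vec[OF A(1) g(1)] A(1) x by simp
  also have "A *\<^sub>v (A *\<^sub>v x) = A *\<^sub>v x" using assoc_mult_mat_vec[OF A(1) A(1) x] A(2) by simp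
  finally show ?thesis using g(2) by simp
qed

lemma nonneg4:
  fixes a b c d :: complex
  assumes "a \<ge> 0" "b \<ge> 0" "c \<ge> 0" "d \<ge> 0" "a + b + c + d = 0"
  shows "a = 0 \<and> b = 0 \<and> c = 0 \<and> d = 0"
  using assms by (metis add_nonneg_eq_0_iff add_nonneg_nonneg)

lemma subeq0:
  fixes u v :: "complex vec"
  assumes "u \<in> carrier_vec n" "v \<in> carrier_vec n" "u - v = 0\<^sub>v n"
  shows "u = v"
proof (rule eq_vecI)
  fix j assume j: "j < dim_vec v"
  have "(u - v) $ j = 0" using assms(3) j assms(2) by simp
  moreover have "(u - v) $ j = u $ j - v $ j" using index_minus_vec(1)[of j v u] j by simp
  ultimately show "u $ j = v $ j" by simp
qed (use assms in auto)

lemma ip4: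
  fixes x w1 w2 w3 w4 :: "complex vec"
  assumes "x \<in> carrier_vec n" "w1 \<in> carrier_vec n" "w2 \<in> carrier_vec n" "w3 \<in> carrier_vec n" "w4 \<in> carrier_vec n"
  shows "x \<bullet>c (w1 + w2 + w3 + w4) = x \<bullet>c w1 + x \<bullet>c w2 + x \<bullet>c w3 + x \<bullet>c w4"
  using assms by (simp add: ip_add_right[of _ n])

lemma arith4: "(a1::complex) - b1 + (a2 - b2) + (a3 - b3) + (a4 - b4) = (a1+a2+a3+a4) - (b1+b2+b3+b4)"
  by (simp add: algebra_simps)

lemma orth:
  assumes rep: "is_rep n \<alpha> P" and a: "\<alpha> > 0"
    and g: "g1 \<in> carrier_vec n" "g2 \<in> carrier_vec n" "g3 \<in> carrier_vec n" "g4 \<in> carrier_vec n"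
    and gP: "P 1 *\<^sub>v g1 = g1" "P 2 *\<^sub>v g2 = g2" "P 3 *\<^sub>v g3 = g3" "P 4 *\<^sub>v g4 = g4"
  shows "(\<forall>k. inK n P k \<longrightarrow> g1 \<bullet>c k 1 + g2 \<bullet>c k 2 + g3 \<bullet>c k 3 + g4 \<bullet>c k 4 = 0) \<longleftrightarrow>
         (\<exists>x\<in>carrier_vec n. g1 = P 1 *\<^sub>v x \<and> g2 = P 2 *\<^sub>v x \<and> g3 = P 3 *\<^sub>v x \<and> g4 = P 4 *\<^sub>v x)"
proof -
  have c1: "P 1 \<in> carrier_mat n n" "P 1 * P 1 = P 1" "mat_adjoint (P 1) = P 1" using rep_proj[OF rep, of 1] by auto
  have c2: "P 2 \<in> carrier_mat n n" "P 2 * P 2 = P 2" "mat_adjoint (P 2) = P 2" using rep_proj[OF rep, of 2] by auto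
  have c3: "P 3 \<in> carrier_mat n n" "P 3 * P 3 = P 3" "mat_adjoint (P 3) = P 3" using rep_proj[OF rep, of 3] by auto
  have c4: "P 4 \<in> carrier_mat n n" "P 4 * P 4 = P 4" "mat_adjoint (P 4) = P 4" using rep_proj[OF rep, of 4] by auto
  show ?thesis
  proof
    assume ort: "\<forall>k. inK n P k \<longrightarrow> g1 \<bullet>c k 1 + g2 \<bullet>c k 2 + g3 \<bullet>c k 3 + g4 \<bullet>c k 4 = 0"
    define G where "G = g1 + g2 + g3 + g4"
    define x where "x = complex_of_real (1/\<alpha>) \<cdot>\<^sub>v G"
    have Gc: "G \<in> carrier_vec n" using g G_def by auto
    have xc: "x \<in> carrier_vec n" using Gc x_def by auto
    define d1 where "d1 = g1 - P 1 *\<^sub>v x"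
    define d2 where "d2 = g2 - P 2 *\<^sub>v x"
    define d3 where "d3 = g3 - P 3 *\<^sub>v x"
    define d4 where "d4 = g4 - P 4 *\<^sub>v x"
    have dc: "d1 \<in> carrier_vec n" "d2 \<in> carrier_vec n" "d3 \<in> carrier_vec n" "d4 \<in> carrier_vec n"
      unfolding d1_def d2_def d3_def d4_def using g c1 c2 c3 c4 xc by auto
    have dP: "P 1 *\<^sub>v d1 = d1" "P 2 *\<^sub>v d2 = d2" "P 3 *\<^sub>v d3 = d3" "P 4 *\<^sub>v d4 = d4"
      unfolding d1_def d2_def d3_def d4_def
      using dlem[OF c1(1,2) g(1) gP(1) xc] dlem[OF c2(1,2) g(2) gP(2) xc]
        dlem[OF c3(1,2) g(3) gP(3) xc] dlem[OF c4(1,2) g(4) gP(4) xc] by auto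
    have dsum: "d1 + d2 + d3 + d4 = 0\<^sub>v n"
    proof (rule eq_vecI)
      fix j assume "j < dim_vec (0\<^sub>v n :: complex vec)"
      hence j: "j < n" by simp
      have e: "(P 1 *\<^sub>v x) $ j + (P 2 *\<^sub>v x) $ j + (P 3 *\<^sub>v x) $ j + (P 4 *\<^sub>v x) $ j = of_real \<alpha> * x $ j"
        using rep_vec_entry[OF rep xc j] .
      have "(d1 + d2 + d3 + d4) $ j = (g1 $ j + g2 $ j + g3 $ j + g4 $ j)
          - ((P 1 *\<^sub>v x) $ j + (P 2 *\<^sub>v x) $ j + (P 3 *\<^sub>v x) $ j + (P 4 *\<^sub>v x) $ j)"
        using j dc g c1 c2 c3 c4 xc unfolding d1_def d2_def d3_def d4_def by simp
      also have "\<dots> = 0"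
      proof -
        have xj: "x $ j = (1/of_real \<alpha>) * (g1 $ j + g2 $ j + g3 $ j + g4 $ j)" using j g unfolding x_def G_def by simp
        have "complex_of_real \<alpha> \<noteq> 0" using a by simp
        thus ?thesis unfolding e xj by simp
      qed
      finally show "(d1 + d2 + d3 + d4) $ j = 0\<^sub>v n $ j" using j by simp
    qed (use dc in auto)
    have inKd: "inK n P (mk n d1 d2 d3 d4)" unfolding inK_mk using dc dP dsum by auto
    have o1: "g1 \<bullet>c d1 + g2 \<bullet>c d2 + g3 \<bullet>c d3 + g4 \<bullet>c d4 = 0" using ort[rule_format, OF inKd] by simp
    have pi: "(P 1 *\<^sub>v x) \<bullet>c d1 = x \<bullet>c d1" "(P 2 *\<^sub>v x) \<bullet>c d2 = x \<bullet>c d2"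
      "(P 3 *\<^sub>v x) \<bullet>c d3 = x \<bullet>c d3" "(P 4 *\<^sub>v x) \<bullet>c d4 = x \<bullet>c d4"
      using adj_inner[OF c1(1,3) xc dc(1)] adj_inner[OF c2(1,3) xc dc(2)]
        adj_inner[OF c3(1,3) xc dc(3)] adj_inner[OF c4(1,3) xc dc(4)] dP by auto
    have o2: "(P 1 *\<^sub>v x) \<bullet>c d1 + (P 2 *\<^sub>v x) \<bullet>c d2 + (P 3 *\<^sub>v x) \<bullet>c d3 + (P 4 *\<^sub>v x) \<bullet>c d4 = 0"
      unfolding pi using ip4[OF xc dc] dsum ip_zero_right[OF xc] by simp
    have sq: "d1 \<bullet>c d1 = g1 \<bullet>c d1 - (P 1 *\<^sub>v x) \<bullet>c d1" "d2 \<bullet>c d2 = g2 \<bullet>c d2 - (P 2 *\<^sub>v x) \<bullet>c d2"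
      "d3 \<bullet>c d3 = g3 \<bullet>c d3 - (P 3 *\<^sub>v x) \<bullet>c d3" "d4 \<bullet>c d4 = g4 \<bullet>c d4 - (P 4 *\<^sub>v x) \<bullet>c d4"
      using ip_minus_left[of g1 n "P 1 *\<^sub>v x" d1] ip_minus_left[of g2 n "P 2 *\<^sub>v x" d2]
        ip_minus_left[of g3 n "P 3 *\<^sub>v x" d3] ip_minus_left[of g4 n "P 4 *\<^sub>v x" d4]
        g dc c1 c2 c3 c4 xc unfolding d1_def d2_def d3_def d4_def by auto
    have "d1 \<bullet>c d1 + d2 \<bullet>c d2 + d3 \<bullet>c d3 + d4 \<bullet>c d4 = 0"
      unfolding sq arith4 o1 o2 by simp
    hence z: "d1 \<bullet>c d1 = 0" "d2 \<bullet>c d2 = 0" "d3 \<bullet>c d3 = 0" "d4 \<bullet>c d4 = 0"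
      using nonneg4[OF conjugate_square_ge_0_vec conjugate_square_ge_0_vec conjugate_square_ge_0_vec conjugate_square_ge_0_vec]
      by auto
    have "d1 = 0\<^sub>v n" "d2 = 0\<^sub>v n" "d3 = 0\<^sub>v n" "d4 = 0\<^sub>v n" using z dc by auto
    hence "g1 = P 1 *\<^sub>v x" "g2 = P 2 *\<^sub>v x" "g3 = P 3 *\<^sub>v x" "g4 = P 4 *\<^sub>v x"
      unfolding d1_def d2_def d3_def d4_def using subeq0 g c1 c2 c3 c4 xc by (metis mult_mat_vec_carrier)+
    thus "\<exists>x\<in>carrier_vec n. g1 = P 1 *\<^sub>v x \<and> g2 = P 2 *\<^sub>v x \<and> g3 = P 3 *\<^sub>v x \<and> g4 = P 4 *\<^sub>v x"
      using xc by blast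
  next
    assume "\<exists>x\<in>carrier_vec n. g1 = P 1 *\<^sub>v x \<and> g2 = P 2 *\<^sub>v x \<and> g3 = P 3 *\<^sub>v x \<and> g4 = P 4 *\<^sub>v x"
    then obtain x where xc: "x \<in> carrier_vec n" and gx: "g1 = P 1 *\<^sub>v x" "g2 = P 2 *\<^sub>v x" "g3 = P 3 *\<^sub>v x" "g4 = P 4 *\<^sub>v x"
      by blast
    show "\<forall>k. inK n P k \<longrightarrow> g1 \<bullet>c k 1 + g2 \<bullet>c k 2 + g3 \<bullet>c k 3 + g4 \<bullet>c k 4 = 0"
    proof (intro allI impI)
      fix k assume k: "inK n P k"
      have kc: "k 1 \<in> carrier_vec n" "k 2 \<in> carrier_vec n" "k 3 \<in> carrier_vec n" "k 4 \<in> carrier_vec n"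
        and kP: "P 1 *\<^sub>v k 1 = k 1" "P 2 *\<^sub>v k 2 = k 2" "P 3 *\<^sub>v k 3 = k 3" "P 4 *\<^sub>v k 4 = k 4"
        and ks: "k 1 + k 2 + k 3 + k 4 = 0\<^sub>v n" using k unfolding inK_def by auto
      have "g1 \<bullet>c k 1 + g2 \<bullet>c k 2 + g3 \<bullet>c k 3 + g4 \<bullet>c k 4 = x \<bullet>c k 1 + x \<bullet>c k 2 + x \<bullet>c k 3 + x \<bullet>c k 4"
        unfolding gx using adj_inner[OF c1(1,3) xc kc(1)] adj_inner[OF c2(1,3) xc kc(2)]
          adj_inner[OF c3(1,3) xc kc(3)] adj_inner[OF c4(1,3) xc kc(4)] kP by simp
      also have "\<dots> = 0" using ip4[OF xc kc] ks ip_zero_right[OF xc] by simp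
      finally show "g1 \<bullet>c k 1 + g2 \<bullet>c k 2 + g3 \<bullet>c k 3 + g4 \<bullet>c k 4 = 0" .
    qed
  qed
qed

lemma hyp_char:
  assumes rep: "is_rep n \<alpha> P" and a: "\<alpha> > 0"
  shows "l \<in> hyp_Lam n \<alpha> P \<longleftrightarrow> (\<exists>k. inK n P k \<and> (k 1 \<noteq> 0\<^sub>v n \<or> k 2 \<noteq> 0\<^sub>v n \<or> k 3 \<noteq> 0\<^sub>v n \<or> k 4 \<noteq> 0\<^sub>v n) \<and>
      (\<exists>x\<in>carrier_vec n. P 1 *\<^sub>v x = (-l) \<cdot>\<^sub>v k 1 \<and> P 2 *\<^sub>v x = (-l) \<cdot>\<^sub>v k 2
         \<and> P 3 *\<^sub>v x = (complex_of_real (\<alpha>/(\<alpha>-1)) - l) \<cdot>\<^sub>v k 3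
         \<and> P 4 *\<^sub>v x = (complex_of_real (\<alpha>/(\<alpha>-1)) - l) \<cdot>\<^sub>v k 4))"
proof -
  define c where "c = complex_of_real (\<alpha>/(\<alpha>-1))"
  have c1: "P 1 \<in> carrier_mat n n" "P 1 * P 1 = P 1" "mat_adjoint (P 1) = P 1" using rep_proj[OF rep, of 1] by auto
  have c2: "P 2 \<in> carrier_mat n n" "P 2 * P 2 = P 2" "mat_adjoint (P 2) = P 2" using rep_proj[OF rep, of 2] by auto
  have c3: "P 3 \<in> carrier_mat n n" "P 3 * P 3 = P 3" "mat_adjoint (P 3) = P 3" using rep_proj[OF rep, of 3] by auto
  have c4: "P 4 \<in> carrier_mat n n" "P 4 * P 4 = P 4" "mat_adjoint (P 4) = P 4" using rep_proj[OF rep, of 4] by auto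
  have step: "(k \<noteq> hat_zero n \<and> (\<forall>k'\<in>hat_K n \<alpha> P. hat_inner (\<lambda>j. c \<cdot>\<^sub>v (hat_E n 3 k j + hat_E n 4 k j)) k' = l * hat_inner k k'))
     \<longleftrightarrow> ((k 1 \<noteq> 0\<^sub>v n \<or> k 2 \<noteq> 0\<^sub>v n \<or> k 3 \<noteq> 0\<^sub>v n \<or> k 4 \<noteq> 0\<^sub>v n) \<and>
      (\<exists>x\<in>carrier_vec n. P 1 *\<^sub>v x = (-l) \<cdot>\<^sub>v k 1 \<and> P 2 *\<^sub>v x = (-l) \<cdot>\<^sub>v k 2
         \<and> P 3 *\<^sub>v x = (c - l) \<cdot>\<^sub>v k 3 \<and> P 4 *\<^sub>v x = (c - l) \<cdot>\<^sub>v k 4))"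
    if k: "inK n P k" for k
  proof -
    have kc: "k 1 \<in> carrier_vec n" "k 2 \<in> carrier_vec n" "k 3 \<in> carrier_vec n" "k 4 \<in> carrier_vec n"
      and kP: "P 1 *\<^sub>v k 1 = k 1" "P 2 *\<^sub>v k 2 = k 2" "P 3 *\<^sub>v k 3 = k 3" "P 4 *\<^sub>v k 4 = k 4"
      and kout: "\<forall>i. i \<notin> {1..4} \<longrightarrow> k i = 0\<^sub>v n" using k unfolding inK_def by auto
    have nz: "k \<noteq> hat_zero n \<longleftrightarrow> (k 1 \<noteq> 0\<^sub>v n \<or> k 2 \<noteq> 0\<^sub>v n \<or> k 3 \<noteq> 0\<^sub>v n \<or> k 4 \<noteq> 0\<^sub>v n)"
    proof
      assume "k \<noteq> hat_zero n"
      then obtain i where i: "k i \<noteq> 0\<^sub>v n" unfolding hat_zero_def by auto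
      hence "i \<in> {1..4}" using kout by auto
      hence "i = 1 \<or> i = 2 \<or> i = 3 \<or> i = 4" by auto
      thus "k 1 \<noteq> 0\<^sub>v n \<or> k 2 \<noteq> 0\<^sub>v n \<or> k 3 \<noteq> 0\<^sub>v n \<or> k 4 \<noteq> 0\<^sub>v n" using i by auto
    next
      assume "k 1 \<noteq> 0\<^sub>v n \<or> k 2 \<noteq> 0\<^sub>v n \<or> k 3 \<noteq> 0\<^sub>v n \<or> k 4 \<noteq> 0\<^sub>v n"
      thus "k \<noteq> hat_zero n" unfolding hat_zero_def by auto
    qed
    define g1 where "g1 = (-l) \<cdot>\<^sub>v k 1"
    define g2 where "g2 = (-l) \<cdot>\<^sub>v k 2"
    define g3 where "g3 = (c - l) \<cdot>\<^sub>v k 3"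
    define g4 where "g4 = (c - l) \<cdot>\<^sub>v k 4"
    have gc: "g1 \<in> carrier_vec n" "g2 \<in> carrier_vec n" "g3 \<in> carrier_vec n" "g4 \<in> carrier_vec n"
      using kc g1_def g2_def g3_def g4_def by auto
    have gP: "P 1 *\<^sub>v g1 = g1" "P 2 *\<^sub>v g2 = g2" "P 3 *\<^sub>v g3 = g3" "P 4 *\<^sub>v g4 = g4"
      unfolding g1_def g2_def g3_def g4_def
      using mult_mat_vec[OF c1(1) kc(1)] mult_mat_vec[OF c2(1) kc(2)] mult_mat_vec[OF c3(1) kc(3)]
        mult_mat_vec[OF c4(1) kc(4)] kP by auto
    have eq: "hat_inner (\<lambda>j. c \<cdot>\<^sub>v (hat_E n 3 k j + hat_E n 4 k j)) k' = l * hat_inner k k'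
       \<longleftrightarrow> g1 \<bullet>c k' 1 + g2 \<bullet>c k' 2 + g3 \<bullet>c k' 3 + g4 \<bullet>c k' 4 = 0" if k': "inK n P k'" for k'
    proof -
      have k'c: "k' 1 \<in> carrier_vec n" "k' 2 \<in> carrier_vec n" "k' 3 \<in> carrier_vec n" "k' 4 \<in> carrier_vec n"
        using k' unfolding inK_def by auto
      have L: "hat_inner (\<lambda>j. c \<cdot>\<^sub>v (hat_E n 3 k j + hat_E n 4 k j)) k' = c * (k 3 \<bullet>c k' 3) + c * (k 4 \<bullet>c k' 4)"
        unfolding hat_inner4 hat_E_def using kc k'c by simp
      have G: "g1 \<bullet>c k' 1 + g2 \<bullet>c k' 2 + g3 \<bullet>c k' 3 + g4 \<bullet>c k' 4
          = (-l) * (k 1 \<bullet>c k' 1) + (-l) * (k 2 \<bullet>c k' 2) + (c - l) * (k 3 \<bullet>c k' 3) + (c - l) * (k 4 \<bullet>c k' 4)"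
        unfolding g1_def g2_def g3_def g4_def using kc k'c by simp
      have "g1 \<bullet>c k' 1 + g2 \<bullet>c k' 2 + g3 \<bullet>c k' 3 + g4 \<bullet>c k' 4
          = hat_inner (\<lambda>j. c \<cdot>\<^sub>v (hat_E n 3 k j + hat_E n 4 k j)) k' - l * hat_inner k k'"
        unfolding G L by (simp add: hat_inner4 algebra_simps)
      thus ?thesis by simp
    qed
    have "(\<forall>k'\<in>hat_K n \<alpha> P. hat_inner (\<lambda>j. c \<cdot>\<^sub>v (hat_E n 3 k j + hat_E n 4 k j)) k' = l * hat_inner k k')
        \<longleftrightarrow> (\<forall>k'. inK n P k' \<longrightarrow> g1 \<bullet>c k' 1 + g2 \<bullet>c k' 2 + g3 \<bullet>c k' 3 + g4 \<bullet>c k' 4 = 0)"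
      using K_char[OF rep a] eq by blast
    also have "\<dots> \<longleftrightarrow> (\<exists>x\<in>carrier_vec n. g1 = P 1 *\<^sub>v x \<and> g2 = P 2 *\<^sub>v x \<and> g3 = P 3 *\<^sub>v x \<and> g4 = P 4 *\<^sub>v x)"
      by (rule orth[OF rep a gc gP])
    also have "\<dots> \<longleftrightarrow> (\<exists>x\<in>carrier_vec n. P 1 *\<^sub>v x = g1 \<and> P 2 *\<^sub>v x = g2 \<and> P 3 *\<^sub>v x = g3 \<and> P 4 *\<^sub>v x = g4)"
      by auto
    finally have A: "(\<forall>k'\<in>hat_K n \<alpha> P. hat_inner (\<lambda>j. c \<cdot>\<^sub>v (hat_E n 3 k j + hat_E n 4 k j)) k' = l * hat_inner k k')
        \<longleftrightarrow> (\<exists>x\<in>carrier_vec n. P 1 *\<^sub>v x = g1 \<and> P 2 *\<^sub>v x = g2 \<and> P 3 *\<^sub>v x = g3 \<and> P 4 *\<^sub>v x = g4)" .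
    show ?thesis unfolding g1_def[symmetric] g2_def[symmetric] g3_def[symmetric] g4_def[symmetric]
      by (simp only: nz A)
  qed
  have "l \<in> hyp_Lam n \<alpha> P \<longleftrightarrow> (\<exists>k. inK n P k \<and> k \<noteq> hat_zero n \<and>
      (\<forall>k'\<in>hat_K n \<alpha> P. hat_inner (\<lambda>j. c \<cdot>\<^sub>v (hat_E n 3 k j + hat_E n 4 k j)) k' = l * hat_inner k k'))"
    by (simp only: hyp_Lam_def c_def mem_Collect_eq Bex_def K_char[OF rep a] conj_assoc)
  also have "\<dots> \<longleftrightarrow> (\<exists>k. inK n P k \<and> (k 1 \<noteq> 0\<^sub>v n \<or> k 2 \<noteq> 0\<^sub>v n \<or> k 3 \<noteq> 0\<^sub>v n \<or> k 4 \<noteq> 0\<^sub>v n) \<and>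
      (\<exists>x\<in>carrier_vec n. P 1 *\<^sub>v x = (-l) \<cdot>\<^sub>v k 1 \<and> P 2 *\<^sub>v x = (-l) \<cdot>\<^sub>v k 2
         \<and> P 3 *\<^sub>v x = (c - l) \<cdot>\<^sub>v k 3 \<and> P 4 *\<^sub>v x = (c - l) \<cdot>\<^sub>v k 4))" (is "(\<exists>k. ?L k) \<longleftrightarrow> (\<exists>k. ?R k)")
  proof
    assume "\<exists>k. ?L k"
    then obtain k where k: "inK n P k" and r: "k \<noteq> hat_zero n \<and>
      (\<forall>k'\<in>hat_K n \<alpha> P. hat_inner (\<lambda>j. c \<cdot>\<^sub>v (hat_E n 3 k j + hat_E n 4 k j)) k' = l * hat_inner k k')" by blast
    have "?R k" using k iffD1[OF step[OF k] r] by (rule conjI)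
    thus "\<exists>k. ?R k" by (rule exI[where x=k])
  next
    assume "\<exists>k. ?R k"
    then obtain k where k: "inK n P k" and r: "(k 1 \<noteq> 0\<^sub>v n \<or> k 2 \<noteq> 0\<^sub>v n \<or> k 3 \<noteq> 0\<^sub>v n \<or> k 4 \<noteq> 0\<^sub>v n) \<and>
      (\<exists>x\<in>carrier_vec n. P 1 *\<^sub>v x = (-l) \<cdot>\<^sub>v k 1 \<and> P 2 *\<^sub>v x = (-l) \<cdot>\<^sub>v k 2
         \<and> P 3 *\<^sub>v x = (c - l) \<cdot>\<^sub>v k 3 \<and> P 4 *\<^sub>v x = (c - l) \<cdot>\<^sub>v k 4)" by blast
    have "?L k" using k iffD2[OF step[OF k] r] by (rule conjI)
    thus "\<exists>k. ?L k" by (rule exI[where x=k])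
  qed
  finally show ?thesis unfolding c_def .
qed



lemma smult0v: "v \<in> carrier_vec n \<Longrightarrow> (0::complex) \<cdot>\<^sub>v v = 0\<^sub>v n" by (intro eq_vecI) auto
lemma smultv0: "a \<cdot>\<^sub>v (0\<^sub>v n :: complex vec) = 0\<^sub>v n" by (intro eq_vecI) auto

lemma pp:
  fixes A :: "complex mat"
  assumes "A \<in> carrier_mat n n" "A * A = A" "x \<in> carrier_vec n"
  shows "A *\<^sub>v (a \<cdot>\<^sub>v (A *\<^sub>v x)) = a \<cdot>\<^sub>v (A *\<^sub>v x)"
proof -
  have "A *\<^sub>v (A *\<^sub>v x) = A *\<^sub>v x" using assoc_mult_mat_vec[OF assms(1) assms(1) assms(3)] assms(2) by simp
  thus ?thesis using mult_mat_vec[OF assms(1), of "A *\<^sub>v x" a] assms by simp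
qed

lemma mem_Lam:
  assumes c3: "P 3 \<in> carrier_mat n n" and c4: "P 4 \<in> carrier_mat n n"
  shows "l \<in> Lam P \<longleftrightarrow> (\<exists>x\<in>carrier_vec n. x \<noteq> 0\<^sub>v n \<and> (\<forall>j<n. (P 3 *\<^sub>v x) $ j + (P 4 *\<^sub>v x) $ j = l * x $ j))"
proof -
  have d: "dim_row (P 3 + P 4) = n" using c3 c4 by simp
  have e: "(P 3 + P 4) *\<^sub>v x = l \<cdot>\<^sub>v x \<longleftrightarrow> (\<forall>j<n. (P 3 *\<^sub>v x) $ j + (P 4 *\<^sub>v x) $ j = l * x $ j)"
    if x: "x \<in> carrier_vec n" for x
  proof -
    have "(P 3 + P 4) *\<^sub>v x = P 3 *\<^sub>v x + P 4 *\<^sub>v x" using add_mult_distrib_mat_vec[OF c3 c4 x] .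
    thus ?thesis using veq[of "(P 3 + P 4) *\<^sub>v x" n "l \<cdot>\<^sub>v x"] c3 c4 x by auto
  qed
  show ?thesis unfolding Lam_def mem_Collect_eq eigenvalue_def eigenvector_def d using e by blast
qed

lemma neg_pair:
  fixes u w :: "complex vec"
  assumes u: "u \<in> carrier_vec n" and w: "w \<in> carrier_vec n" and s: "\<forall>j<n. u $ j + w $ j = 0"
  shows "w = (-1) \<cdot>\<^sub>v u \<and> u = (-1) \<cdot>\<^sub>v w"
proof
  show "w = (-1) \<cdot>\<^sub>v u"
  proof (rule eq_vecI)
    fix j assume "j < dim_vec ((-1) \<cdot>\<^sub>v u)"
    hence j: "j < n" using u by simp
    have "w $ j = - u $ j" using s j by (metis add_eq_0_iff)
    thus "w $ j = ((-1) \<cdot>\<^sub>v u) $ j" using j u by simp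
  qed (use u w in simp)
  show "u = (-1) \<cdot>\<^sub>v w"
  proof (rule eq_vecI)
    fix j assume "j < dim_vec ((-1) \<cdot>\<^sub>v w)"
    hence j: "j < n" using w by simp
    have "u $ j = - w $ j" using s j by (metis eq_neg_iff_add_eq_0)
    thus "u $ j = ((-1) \<cdot>\<^sub>v w) $ j" using j w by simp
  qed (use u w in simp)
qed

context
  fixes n :: nat and \<alpha> :: real and P :: "nat \<Rightarrow> complex mat"
  assumes rep: "is_rep n \<alpha> P" and apos: "\<alpha> > 0" and a1: "\<alpha> \<noteq> 1"
begin

lemma cs: "P 1 \<in> carrier_mat n n" "P 1 * P 1 = P 1" "mat_adjoint (P 1) = P 1"
  "P 2 \<in> carrier_mat n n" "P 2 * P 2 = P 2" "mat_adjoint (P 2) = P 2"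
  "P 3 \<in> carrier_mat n n" "P 3 * P 3 = P 3" "mat_adjoint (P 3) = P 3"
  "P 4 \<in> carrier_mat n n" "P 4 * P 4 = P 4" "mat_adjoint (P 4) = P 4"
  using rep_proj[OF rep] by auto

lemma Eig0: "0 \<in> Lam P \<longleftrightarrow> (\<exists>w\<in>carrier_vec n. w \<noteq> 0\<^sub>v n \<and> P 3 *\<^sub>v w = 0\<^sub>v n \<and> P 4 *\<^sub>v w = 0\<^sub>v n)"
proof
  assume "0 \<in> Lam P"
  then obtain x where x: "x \<in> carrier_vec n" "x \<noteq> 0\<^sub>v n" "\<forall>j<n. (P 3 *\<^sub>v x) $ j + (P 4 *\<^sub>v x) $ j = 0 * x $ j"
    using mem_Lam[OF cs(7) cs(10)] by blast
  have "(P 3 + P 4) *\<^sub>v x = 0\<^sub>v n"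
    unfolding add_mult_distrib_mat_vec[OF cs(7) cs(10) x(1)] using x cs by (intro eq_vecI) auto
  thus "\<exists>w\<in>carrier_vec n. w \<noteq> 0\<^sub>v n \<and> P 3 *\<^sub>v w = 0\<^sub>v n \<and> P 4 *\<^sub>v w = 0\<^sub>v n"
    using proj_sum_zero[OF cs(7-9) cs(10-12) x(1)] x by blast
next
  assume "\<exists>w\<in>carrier_vec n. w \<noteq> 0\<^sub>v n \<and> P 3 *\<^sub>v w = 0\<^sub>v n \<and> P 4 *\<^sub>v w = 0\<^sub>v n"
  then obtain w where w: "w \<in> carrier_vec n" "w \<noteq> 0\<^sub>v n" "P 3 *\<^sub>v w = 0\<^sub>v n" "P 4 *\<^sub>v w = 0\<^sub>v n" by blast
  show "0 \<in> Lam P" unfolding mem_Lam[OF cs(7) cs(10)] using w by auto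
qed

lemma EigA: "complex_of_real \<alpha> \<in> Lam P \<longleftrightarrow> (\<exists>w\<in>carrier_vec n. w \<noteq> 0\<^sub>v n \<and> P 1 *\<^sub>v w = 0\<^sub>v n \<and> P 2 *\<^sub>v w = 0\<^sub>v n)"
proof
  assume "complex_of_real \<alpha> \<in> Lam P"
  then obtain x where x: "x \<in> carrier_vec n" "x \<noteq> 0\<^sub>v n" "\<forall>j<n. (P 3 *\<^sub>v x) $ j + (P 4 *\<^sub>v x) $ j = of_real \<alpha> * x $ j"
    using mem_Lam[OF cs(7) cs(10)] by blast
  have "(P 1 + P 2) *\<^sub>v x = 0\<^sub>v n"
  proof (rule eq_vecI)
    fix j assume "j < dim_vec (0\<^sub>v n :: complex vec)"
    hence j: "j < n" by simp
    have "(P 1 *\<^sub>v x) $ j + (P 2 *\<^sub>v x) $ j = 0" using rep_vec_entry[OF rep x(1) j] x(3) j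
      by (simp add: algebra_simps)
    thus "((P 1 + P 2) *\<^sub>v x) $ j = 0\<^sub>v n $ j"
      unfolding add_mult_distrib_mat_vec[OF cs(1) cs(4) x(1)] using j cs x by simp
  qed (use cs in simp)
  thus "\<exists>w\<in>carrier_vec n. w \<noteq> 0\<^sub>v n \<and> P 1 *\<^sub>v w = 0\<^sub>v n \<and> P 2 *\<^sub>v w = 0\<^sub>v n"
    using proj_sum_zero[OF cs(1-3) cs(4-6) x(1)] x by blast
next
  assume "\<exists>w\<in>carrier_vec n. w \<noteq> 0\<^sub>v n \<and> P 1 *\<^sub>v w = 0\<^sub>v n \<and> P 2 *\<^sub>v w = 0\<^sub>v n"
  then obtain w where w: "w \<in> carrier_vec n" "w \<noteq> 0\<^sub>v n" "P 1 *\<^sub>v w = 0\<^sub>v n" "P 2 *\<^sub>v w = 0\<^sub>v n" by blast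
  have "\<forall>j<n. (P 3 *\<^sub>v w) $ j + (P 4 *\<^sub>v w) $ j = of_real \<alpha> * w $ j"
  proof (intro allI impI)
    fix j assume j: "j < n"
    show "(P 3 *\<^sub>v w) $ j + (P 4 *\<^sub>v w) $ j = of_real \<alpha> * w $ j"
      using rep_vec_entry[OF rep w(1) j] w(3,4) j by simp
  qed
  thus "complex_of_real \<alpha> \<in> Lam P" unfolding mem_Lam[OF cs(7) cs(10)] using w by blast
qed

lemma L_zero:
  assumes v: "v \<in> carrier_vec n" "v \<noteq> 0\<^sub>v n" "P 1 *\<^sub>v v = v" "P 2 *\<^sub>v v = v"
  shows "0 \<in> hyp_Lam n \<alpha> P"
proof -
  define k where "k = mk n v ((-1) \<cdot>\<^sub>v v) (0\<^sub>v n) (0\<^sub>v n)"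
  have s: "v + (-1) \<cdot>\<^sub>v v + 0\<^sub>v n + 0\<^sub>v n = 0\<^sub>v n" by (intro eq_vecI) (use v(1) in auto)
  have p2: "P 2 *\<^sub>v ((-1) \<cdot>\<^sub>v v) = (-1) \<cdot>\<^sub>v v" using mult_mat_vec[OF cs(4) v(1)] v(4) by simp
  have K: "inK n P k" unfolding k_def inK_mk using v p2 s mv_zero[OF cs(7)] mv_zero[OF cs(10)] by simp
  have X: "P 1 *\<^sub>v 0\<^sub>v n = (-0) \<cdot>\<^sub>v k 1" "P 2 *\<^sub>v 0\<^sub>v n = (-0) \<cdot>\<^sub>v k 2"
    "P 3 *\<^sub>v 0\<^sub>v n = (complex_of_real (\<alpha>/(\<alpha>-1)) - 0) \<cdot>\<^sub>v k 3"
    "P 4 *\<^sub>v 0\<^sub>v n = (complex_of_real (\<alpha>/(\<alpha>-1)) - 0) \<cdot>\<^sub>v k 4"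
    unfolding k_def using mv_zero[OF cs(1)] mv_zero[OF cs(4)] mv_zero[OF cs(7)] mv_zero[OF cs(10)] v(1)
      smult0v[OF v(1)] smult0v[of "(-1) \<cdot>\<^sub>v v" n] smultv0 by simp_all
  have NZ: "k 1 \<noteq> 0\<^sub>v n" unfolding k_def using v by simp
  show ?thesis unfolding hyp_char[OF rep apos]
  proof (intro exI[where x=k] conjI)
    show "inK n P k" by (rule K)
    show "k 1 \<noteq> 0\<^sub>v n \<or> k 2 \<noteq> 0\<^sub>v n \<or> k 3 \<noteq> 0\<^sub>v n \<or> k 4 \<noteq> 0\<^sub>v n" using NZ by (rule disjI1)
    show "\<exists>x\<in>carrier_vec n. P 1 *\<^sub>v x = (-0) \<cdot>\<^sub>v k 1 \<and> P 2 *\<^sub>v x = (-0) \<cdot>\<^sub>v k 2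
         \<and> P 3 *\<^sub>v x = (complex_of_real (\<alpha>/(\<alpha>-1)) - 0) \<cdot>\<^sub>v k 3
         \<and> P 4 *\<^sub>v x = (complex_of_real (\<alpha>/(\<alpha>-1)) - 0) \<cdot>\<^sub>v k 4"
      by (rule bexI[where x="0\<^sub>v n"]) (use X in auto)
  qed
qed

lemma L_c:
  assumes v: "v \<in> carrier_vec n" "v \<noteq> 0\<^sub>v n" "P 3 *\<^sub>v v = v" "P 4 *\<^sub>v v = v"
  shows "complex_of_real (\<alpha>/(\<alpha>-1)) \<in> hyp_Lam n \<alpha> P"
proof -
  define c where "c = complex_of_real (\<alpha>/(\<alpha>-1))"
  define k where "k = mk n (0\<^sub>v n) (0\<^sub>v n) v ((-1) \<cdot>\<^sub>v v)"
  have s: "0\<^sub>v n + 0\<^sub>v n + v + (-1) \<cdot>\<^sub>v v = 0\<^sub>v n" by (intro eq_vecI) (use v(1) in auto)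
  have p4: "P 4 *\<^sub>v ((-1) \<cdot>\<^sub>v v) = (-1) \<cdot>\<^sub>v v" using mult_mat_vec[OF cs(10) v(1)] v(4) by simp
  have K: "inK n P k" unfolding k_def inK_mk using v p4 s mv_zero[OF cs(1)] mv_zero[OF cs(4)] by simp
  have X: "P 1 *\<^sub>v 0\<^sub>v n = (-c) \<cdot>\<^sub>v k 1" "P 2 *\<^sub>v 0\<^sub>v n = (-c) \<cdot>\<^sub>v k 2"
    "P 3 *\<^sub>v 0\<^sub>v n = (c - c) \<cdot>\<^sub>v k 3" "P 4 *\<^sub>v 0\<^sub>v n = (c - c) \<cdot>\<^sub>v k 4"
    unfolding k_def using mv_zero[OF cs(1)] mv_zero[OF cs(4)] mv_zero[OF cs(7)] mv_zero[OF cs(10)] v(1)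
      smult0v[OF v(1)] smult0v[of "(-1) \<cdot>\<^sub>v v" n] smultv0 by simp_all
  have NZ: "k 3 \<noteq> 0\<^sub>v n" unfolding k_def using v by simp
  show ?thesis unfolding hyp_char[OF rep apos] c_def[symmetric]
  proof (intro exI[where x=k] conjI)
    show "inK n P k" by (rule K)
    show "k 1 \<noteq> 0\<^sub>v n \<or> k 2 \<noteq> 0\<^sub>v n \<or> k 3 \<noteq> 0\<^sub>v n \<or> k 4 \<noteq> 0\<^sub>v n" using NZ by simp
    show "\<exists>x\<in>carrier_vec n. P 1 *\<^sub>v x = (-c) \<cdot>\<^sub>v k 1 \<and> P 2 *\<^sub>v x = (-c) \<cdot>\<^sub>v k 2
         \<and> P 3 *\<^sub>v x = (c - c) \<cdot>\<^sub>v k 3 \<and> P 4 *\<^sub>v x = (c - c) \<cdot>\<^sub>v k 4"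
      by (rule bexI[where x="0\<^sub>v n"]) (use X in auto)
  qed
qed

lemma consts_facts:
  shows "complex_of_real (\<alpha>/(\<alpha>-1)) = complex_of_real \<alpha> / complex_of_real (\<alpha>-1)"
    "complex_of_real (1/(\<alpha>-1)) = 1 / complex_of_real (\<alpha>-1)"
    "complex_of_real (\<alpha>-1) \<noteq> 0" "complex_of_real \<alpha> \<noteq> 0"
    "complex_of_real (\<alpha>/(\<alpha>-1)) \<noteq> 0"
  using apos a1 by auto

lemma L_gen:
  assumes lam: "lam \<in> Lam P" "lam \<noteq> 0" "lam \<noteq> complex_of_real \<alpha>"
  shows "complex_of_real (\<alpha>/(\<alpha>-1)) - complex_of_real (1/(\<alpha>-1)) * lam \<in> hyp_Lam n \<alpha> P"
proof -
  define c where "c = complex_of_real (\<alpha>/(\<alpha>-1))"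
  define t where "t = complex_of_real (1/(\<alpha>-1))"
  define A1 where "A1 = complex_of_real (\<alpha>-1)"
  define a' where "a' = complex_of_real \<alpha>"
  have cf: "c = a' / A1" "t = 1 / A1" "A1 \<noteq> 0" "a' \<noteq> 0"
    using consts_facts unfolding c_def t_def A1_def a'_def by auto
  obtain x where x: "x \<in> carrier_vec n" "x \<noteq> 0\<^sub>v n" and E: "\<forall>j<n. (P 3 *\<^sub>v x) $ j + (P 4 *\<^sub>v x) $ j = lam * x $ j"
    using lam(1) mem_Lam[OF cs(7) cs(10)] by blast
  define l where "l = c - t * lam"
  have lA: "l * A1 = a' - lam" unfolding l_def cf(1,2) using cf(3) by (simp add: field_simps)
  have lnz: "l \<noteq> 0" using lA lam(3) unfolding a'_def by auto
  have clt: "c - l = t * lam" unfolding l_def by simp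
  have tA: "t * A1 = 1" using cf by simp
  define \<beta> where "\<beta> = A1 / lam"
  define k1 where "k1 = (-1/l) \<cdot>\<^sub>v (P 1 *\<^sub>v x)"
  define k2 where "k2 = (-1/l) \<cdot>\<^sub>v (P 2 *\<^sub>v x)"
  define k3 where "k3 = \<beta> \<cdot>\<^sub>v (P 3 *\<^sub>v x)"
  define k4 where "k4 = \<beta> \<cdot>\<^sub>v (P 4 *\<^sub>v x)"
  have kc: "k1 \<in> carrier_vec n" "k2 \<in> carrier_vec n" "k3 \<in> carrier_vec n" "k4 \<in> carrier_vec n"
    unfolding k1_def k2_def k3_def k4_def using cs x by auto
  have kP: "P 1 *\<^sub>v k1 = k1" "P 2 *\<^sub>v k2 = k2" "P 3 *\<^sub>v k3 = k3" "P 4 *\<^sub>v k4 = k4"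
    unfolding k1_def k2_def k3_def k4_def using pp[OF cs(1,2) x(1)] pp[OF cs(4,5) x(1)]
      pp[OF cs(7,8) x(1)] pp[OF cs(10,11) x(1)] by auto
  have e12: "(P 1 *\<^sub>v x) $ j + (P 2 *\<^sub>v x) $ j = l * A1 * x $ j" if j: "j < n" for j
  proof -
    have R: "(P 1 *\<^sub>v x) $ j + (P 2 *\<^sub>v x) $ j + (P 3 *\<^sub>v x) $ j + (P 4 *\<^sub>v x) $ j = a' * x $ j"
      using rep_vec_entry[OF rep x(1) j] unfolding a'_def .
    have "(P 1 *\<^sub>v x) $ j + (P 2 *\<^sub>v x) $ j = ((P 1 *\<^sub>v x) $ j + (P 2 *\<^sub>v x) $ j + (P 3 *\<^sub>v x) $ j + (P 4 *\<^sub>v x) $ j)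
        - ((P 3 *\<^sub>v x) $ j + (P 4 *\<^sub>v x) $ j)" by (simp add: algebra_simps)
    also have "\<dots> = a' * x $ j - lam * x $ j" using R E j by simp
    also have "\<dots> = l * A1 * x $ j" unfolding lA by (simp add: algebra_simps)
    finally show ?thesis .
  qed
  have ks: "k1 + k2 + k3 + k4 = 0\<^sub>v n"
  proof (rule eq_vecI)
    fix j assume "j < dim_vec (0\<^sub>v n :: complex vec)"
    hence j: "j < n" by simp
    have "(k1 + k2 + k3 + k4) $ j = (-1/l) * ((P 1 *\<^sub>v x) $ j + (P 2 *\<^sub>v x) $ j) + \<beta> * ((P 3 *\<^sub>v x) $ j + (P 4 *\<^sub>v x) $ j)"
      unfolding k1_def k2_def k3_def k4_def using j cs x by (simp add: algebra_simps)
    also have "\<dots> = (-1/l) * (l * A1 * x $ j) + \<beta> * (lam * x $ j)" using e12[OF j] E j by simp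
    also have "\<dots> = 0" unfolding \<beta>_def using lnz lam(2) by (simp add: field_simps)
    finally show "(k1 + k2 + k3 + k4) $ j = 0\<^sub>v n $ j" using j by simp
  qed (use kc in auto)
  have nz: "k3 \<noteq> 0\<^sub>v n \<or> k4 \<noteq> 0\<^sub>v n"
  proof (rule ccontr)
    assume "\<not> ?thesis"
    hence z: "k3 = 0\<^sub>v n" "k4 = 0\<^sub>v n" by auto
    have "x = 0\<^sub>v n"
    proof (rule eq_vecI)
      fix j assume "j < dim_vec (0\<^sub>v n :: complex vec)"
      hence j: "j < n" by simp
      have "k3 $ j + k4 $ j = 0" using z j by simp
      hence "\<beta> * ((P 3 *\<^sub>v x) $ j + (P 4 *\<^sub>v x) $ j) = 0"
        unfolding k3_def k4_def using j cs x by (simp add: algebra_simps)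
      hence "\<beta> * (lam * x $ j) = 0" using E j by simp
      hence "A1 * x $ j = 0" unfolding \<beta>_def using lam(2) by simp
      thus "x $ j = 0\<^sub>v n $ j" using cf(3) j by simp
    qed (use x in simp)
    thus False using x(2) by simp
  qed
  have X: "P 1 *\<^sub>v x = (-l) \<cdot>\<^sub>v k1" "P 2 *\<^sub>v x = (-l) \<cdot>\<^sub>v k2"
    "P 3 *\<^sub>v x = (c - l) \<cdot>\<^sub>v k3" "P 4 *\<^sub>v x = (c - l) \<cdot>\<^sub>v k4"
  proof -
    have m1: "(-l) * (-1/l) = 1" using lnz by simp
    have m2: "(c - l) * \<beta> = 1" unfolding clt \<beta>_def using lam(2) tA by (simp add: field_simps)
    show "P 1 *\<^sub>v x = (-l) \<cdot>\<^sub>v k1" "P 2 *\<^sub>v x = (-l) \<cdot>\<^sub>v k2"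
      "P 3 *\<^sub>v x = (c - l) \<cdot>\<^sub>v k3" "P 4 *\<^sub>v x = (c - l) \<cdot>\<^sub>v k4"
      unfolding k1_def k2_def k3_def k4_def smult_smult_assoc m1 m2 using cs x by auto
  qed
  have K: "inK n P (mk n k1 k2 k3 k4)" unfolding inK_mk using kc kP ks by simp
  have "l \<in> hyp_Lam n \<alpha> P" unfolding hyp_char[OF rep apos] c_def[symmetric]
  proof (intro exI[where x="mk n k1 k2 k3 k4"] conjI)
    show "inK n P (mk n k1 k2 k3 k4)" by (rule K)
    show "mk n k1 k2 k3 k4 1 \<noteq> 0\<^sub>v n \<or> mk n k1 k2 k3 k4 2 \<noteq> 0\<^sub>v n \<or> mk n k1 k2 k3 k4 3 \<noteq> 0\<^sub>v n \<or> mk n k1 k2 k3 k4 4 \<noteq> 0\<^sub>v n"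
      using nz by simp
    show "\<exists>xa\<in>carrier_vec n. P 1 *\<^sub>v xa = (-l) \<cdot>\<^sub>v mk n k1 k2 k3 k4 1 \<and> P 2 *\<^sub>v xa = (-l) \<cdot>\<^sub>v mk n k1 k2 k3 k4 2
         \<and> P 3 *\<^sub>v xa = (c - l) \<cdot>\<^sub>v mk n k1 k2 k3 k4 3 \<and> P 4 *\<^sub>v xa = (c - l) \<cdot>\<^sub>v mk n k1 k2 k3 k4 4"
      by (rule bexI[where x=x]) (use X x in auto)
  qed
  thus ?thesis unfolding l_def c_def t_def .
qed

lemma L_fwd:
  assumes l: "l \<in> hyp_Lam n \<alpha> P"
  shows "(\<exists>lam\<in>Lam P. l = complex_of_real (\<alpha>/(\<alpha>-1)) - complex_of_real (1/(\<alpha>-1)) * lam)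
    \<or> (l = 0 \<and> (\<exists>v\<in>carrier_vec n. v \<noteq> 0\<^sub>v n \<and> P 1 *\<^sub>v v = v \<and> P 2 *\<^sub>v v = v))
    \<or> (l = complex_of_real (\<alpha>/(\<alpha>-1)) \<and> (\<exists>v\<in>carrier_vec n. v \<noteq> 0\<^sub>v n \<and> P 3 *\<^sub>v v = v \<and> P 4 *\<^sub>v v = v))"
proof -
  define c where "c = complex_of_real (\<alpha>/(\<alpha>-1))"
  define t where "t = complex_of_real (1/(\<alpha>-1))"
  define A1 where "A1 = complex_of_real (\<alpha>-1)"
  define a' where "a' = complex_of_real \<alpha>"
  have cf: "c = a' / A1" "t = 1 / A1" "A1 \<noteq> 0" "a' \<noteq> 0" "c \<noteq> 0"
    using consts_facts unfolding c_def t_def A1_def a'_def by auto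
  obtain k x where k: "inK n P k" and nz: "k 1 \<noteq> 0\<^sub>v n \<or> k 2 \<noteq> 0\<^sub>v n \<or> k 3 \<noteq> 0\<^sub>v n \<or> k 4 \<noteq> 0\<^sub>v n"
    and x: "x \<in> carrier_vec n" and X: "P 1 *\<^sub>v x = (-l) \<cdot>\<^sub>v k 1" "P 2 *\<^sub>v x = (-l) \<cdot>\<^sub>v k 2"
      "P 3 *\<^sub>v x = (c - l) \<cdot>\<^sub>v k 3" "P 4 *\<^sub>v x = (c - l) \<cdot>\<^sub>v k 4"
    using l unfolding hyp_char[OF rep apos] c_def by blast
  have kc: "k 1 \<in> carrier_vec n" "k 2 \<in> carrier_vec n" "k 3 \<in> carrier_vec n" "k 4 \<in> carrier_vec n"
    and kP: "P 1 *\<^sub>v k 1 = k 1" "P 2 *\<^sub>v k 2 = k 2" "P 3 *\<^sub>v k 3 = k 3" "P 4 *\<^sub>v k 4 = k 4"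
    and ks: "k 1 + k 2 + k 3 + k 4 = 0\<^sub>v n" using k unfolding inK_def by auto
  have E: "(P 1 *\<^sub>v x) $ j = -l * k 1 $ j" "(P 2 *\<^sub>v x) $ j = -l * k 2 $ j"
    "(P 3 *\<^sub>v x) $ j = (c - l) * k 3 $ j" "(P 4 *\<^sub>v x) $ j = (c - l) * k 4 $ j" if j: "j < n" for j
    using X kc j by auto
  have S: "k 1 $ j + k 2 $ j = - (k 3 $ j + k 4 $ j)" if j: "j < n" for j
  proof -
    have "(k 1 + k 2 + k 3 + k 4) $ j = 0" using ks j by simp
    hence "(k 1 $ j + k 2 $ j) + (k 3 $ j + k 4 $ j) = 0" using kc j by (simp add: add.assoc)
    thus ?thesis by (metis eq_neg_iff_add_eq_0)
  qed
  have K34: "k 3 $ j + k 4 $ j = A1 * x $ j" if j: "j < n" for j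
  proof -
    have "a' * x $ j = (P 1 *\<^sub>v x) $ j + (P 2 *\<^sub>v x) $ j + (P 3 *\<^sub>v x) $ j + (P 4 *\<^sub>v x) $ j"
      using rep_vec_entry[OF rep x j] unfolding a'_def by simp
    also have "\<dots> = -l * (k 1 $ j + k 2 $ j) + (c - l) * (k 3 $ j + k 4 $ j)" using E[OF j] by (simp add: algebra_simps)
    also have "\<dots> = c * (k 3 $ j + k 4 $ j)" unfolding S[OF j] by (simp add: algebra_simps)
    finally have "a' * x $ j = c * (k 3 $ j + k 4 $ j)" .
    hence h: "a' * x $ j = a' / A1 * (k 3 $ j + k 4 $ j)" unfolding cf(1) .
    have "A1 * (a' * x $ j) = a' * (k 3 $ j + k 4 $ j)" using h cf(3) by (simp add: field_simps)
    hence "a' * (k 3 $ j + k 4 $ j) = a' * (A1 * x $ j)" by (simp add: algebra_simps)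
    thus ?thesis using cf(4) by simp
  qed
  show ?thesis
  proof (cases "x = 0\<^sub>v n")
    case False
    define lam where "lam = (c - l) * A1"
    have "lam \<in> Lam P" unfolding mem_Lam[OF cs(7) cs(10)]
    proof (intro bexI[where x=x] conjI allI impI)
      fix j assume j: "j < n"
      have "(P 3 *\<^sub>v x) $ j + (P 4 *\<^sub>v x) $ j = (c - l) * k 3 $ j + (c - l) * k 4 $ j"
        unfolding E(3,4)[OF j] ..
      also have "\<dots> = (c - l) * (k 3 $ j + k 4 $ j)" by (simp add: algebra_simps)
      also have "\<dots> = lam * x $ j" unfolding K34[OF j] lam_def by (simp add: algebra_simps)
      finally show "(P 3 *\<^sub>v x) $ j + (P 4 *\<^sub>v x) $ j = lam * x $ j" .
    qed (use False x in auto)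
    moreover have "l = c - t * lam" unfolding lam_def cf(2) using cf(3) by (simp add: field_simps)
    ultimately show ?thesis unfolding c_def t_def by blast
  next
    case True
    have Z: "-l * k 1 $ j = 0" "-l * k 2 $ j = 0" "(c - l) * k 3 $ j = 0" "(c - l) * k 4 $ j = 0"
      if j: "j < n" for j
      using E[OF j] True j mv_zero[OF cs(1)] mv_zero[OF cs(4)] mv_zero[OF cs(7)] mv_zero[OF cs(10)] by auto
    have K0: "k 3 $ j + k 4 $ j = 0" "k 1 $ j + k 2 $ j = 0" if j: "j < n" for j
      using K34[OF j] S[OF j] True j by auto
    show ?thesis
    proof (cases "l = 0")
      case l0: True
      have k34: "k 3 = 0\<^sub>v n" "k 4 = 0\<^sub>v n" using Z l0 cf(5) kc by (auto intro!: eq_vecI)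
      have np: "k 2 = (-1) \<cdot>\<^sub>v k 1 \<and> k 1 = (-1) \<cdot>\<^sub>v k 2"
        by (rule neg_pair[OF kc(1,2)]) (use K0(2) in blast)
      note k21 = conjunct1[OF np] and k12 = conjunct2[OF np]
      have k1nz: "k 1 \<noteq> 0\<^sub>v n" using nz k34 k21 by auto
      have "P 2 *\<^sub>v k 1 = k 1" unfolding k12 using mult_mat_vec[OF cs(4) kc(2)] kP(2) by simp
      thus ?thesis using l0 k1nz kc kP(1) by blast
    next
      case lnz: False
      show ?thesis
      proof (cases "l = c")
        case lc: True
        have k12: "k 1 = 0\<^sub>v n" "k 2 = 0\<^sub>v n" using Z lnz kc by (auto intro!: eq_vecI)
        have np: "k 4 = (-1) \<cdot>\<^sub>v k 3 \<and> k 3 = (-1) \<cdot>\<^sub>v k 4"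
          by (rule neg_pair[OF kc(3,4)]) (use K0(1) in blast)
        note k43 = conjunct1[OF np] and k34 = conjunct2[OF np]
        have k3nz: "k 3 \<noteq> 0\<^sub>v n" using nz k12 k43 by auto
        have "P 4 *\<^sub>v k 3 = k 3" unfolding k34 using mult_mat_vec[OF cs(10) kc(4)] kP(4) by simp
        thus ?thesis using lc k3nz kc kP(3) unfolding c_def by blast
      next
        case lnc: False
        have "k 1 = 0\<^sub>v n" "k 2 = 0\<^sub>v n" "k 3 = 0\<^sub>v n" "k 4 = 0\<^sub>v n" using Z lnz lnc kc by (auto intro!: eq_vecI)
        thus ?thesis using nz by auto
      qed
    qed
  qed
qed

lemma fA: "complex_of_real (\<alpha>/(\<alpha>-1)) - complex_of_real (1/(\<alpha>-1)) * complex_of_real \<alpha> = 0"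
proof -
  have "(1/(\<alpha>-1)) * \<alpha> = \<alpha>/(\<alpha>-1)" by simp
  hence "complex_of_real (1/(\<alpha>-1)) * complex_of_real \<alpha> = complex_of_real (\<alpha>/(\<alpha>-1))" by (metis of_real_mult)
  thus ?thesis by simp
qed

lemma main_a:
  assumes r12: "rk n (P 1) + rk n (P 2) > n" and r34: "n = rk n (P 3) + rk n (P 4)"
  shows "hyp_Lam n \<alpha> P = {0} \<union> (\<lambda>l. complex_of_real (\<alpha>/(\<alpha>-1)) - complex_of_real (1/(\<alpha>-1)) * l) ` Lam P"
    (is "_ = {0} \<union> ?f ` _")
proof -
  have z: "0 \<in> hyp_Lam n \<alpha> P"
  proof -
    obtain v where "v \<in> carrier_vec n" "v \<noteq> 0\<^sub>v n" "P 1 *\<^sub>v v = v" "P 2 *\<^sub>v v = v"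
      using D1[OF cs(1,2) cs(4,5) r12] by blast
    thus ?thesis using L_zero by blast
  qed
  show ?thesis
  proof (rule equalityI; rule subsetI)
    fix l assume l: "l \<in> hyp_Lam n \<alpha> P"
    show "l \<in> {0} \<union> ?f ` Lam P"
      using L_fwd[OF l]
    proof (elim disjE conjE)
      assume "\<exists>lam\<in>Lam P. l = ?f lam" thus ?thesis by blast
    next
      assume "l = 0" thus ?thesis by blast
    next
      assume lc: "l = complex_of_real (\<alpha>/(\<alpha>-1))" and
        "\<exists>v\<in>carrier_vec n. v \<noteq> 0\<^sub>v n \<and> P 3 *\<^sub>v v = v \<and> P 4 *\<^sub>v v = v"
      then obtain v where v: "v \<in> carrier_vec n" "v \<noteq> 0\<^sub>v n" "P 3 *\<^sub>v v = v" "P 4 *\<^sub>v v = v" by blast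
      have "\<exists>w\<in>carrier_vec n. w \<noteq> 0\<^sub>v n \<and> P 3 *\<^sub>v w = 0\<^sub>v n \<and> P 4 *\<^sub>v w = 0\<^sub>v n"
        using D2'[OF cs(7-9) cs(10-12) _ v] r34 by simp
      hence "0 \<in> Lam P" using Eig0 by blast
      moreover have "l = ?f 0" using lc by simp
      ultimately show ?thesis by blast
    qed
  next
    fix l assume l: "l \<in> {0} \<union> ?f ` Lam P"
    show "l \<in> hyp_Lam n \<alpha> P"
    proof (cases "l = 0")
      case True thus ?thesis using z by simp
    next
      case False
      then obtain lam where lam: "lam \<in> Lam P" "l = ?f lam" using l by blast
      show ?thesis
      proof (cases "lam = 0")
        case True
        then obtain w where w: "w \<in> carrier_vec n" "w \<noteq> 0\<^sub>v n" "P 3 *\<^sub>v w = 0\<^sub>v n" "P 4 *\<^sub>v w = 0\<^sub>v n"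
          using lam(1) Eig0 by blast
        obtain v where "v \<in> carrier_vec n" "v \<noteq> 0\<^sub>v n" "P 3 *\<^sub>v v = v" "P 4 *\<^sub>v v = v"
          using D2[OF cs(7-9) cs(10-12) _ w] r34 by auto
        hence "complex_of_real (\<alpha>/(\<alpha>-1)) \<in> hyp_Lam n \<alpha> P" using L_c by blast
        thus ?thesis using lam True by simp
      next
        case lnz: False
        show ?thesis
        proof (cases "lam = complex_of_real \<alpha>")
          case True
          hence "l = 0" using lam fA by simp
          thus ?thesis using z by simp
        next
          case False
          thus ?thesis using L_gen[OF lam(1) lnz False] lam(2) by simp
        qed
      qed
    qed
  qed
qed

lemma main_b:
  assumes r34: "rk n (P 3) + rk n (P 4) > n" and r12: "n = rk n (P 1) + rk n (P 2)"
  shows "hyp_Lam n \<alpha> P = {complex_of_real (\<alpha>/(\<alpha>-1))} \<union> (\<lambda>l. complex_of_real (\<alpha>/(\<alpha>-1)) - complex_of_real (1/(\<alpha>-1)) * l) ` Lam P"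
    (is "_ = {?c} \<union> ?f ` _")
proof -
  have z: "?c \<in> hyp_Lam n \<alpha> P"
  proof -
    obtain v where "v \<in> carrier_vec n" "v \<noteq> 0\<^sub>v n" "P 3 *\<^sub>v v = v" "P 4 *\<^sub>v v = v"
      using D1[OF cs(7,8) cs(10,11) r34] by blast
    thus ?thesis using L_c by blast
  qed
  show ?thesis
  proof (rule equalityI; rule subsetI)
    fix l assume l: "l \<in> hyp_Lam n \<alpha> P"
    show "l \<in> {?c} \<union> ?f ` Lam P"
      using L_fwd[OF l]
    proof (elim disjE conjE)
      assume "\<exists>lam\<in>Lam P. l = ?f lam" thus ?thesis by blast
    next
      assume l0: "l = 0" and
        "\<exists>v\<in>carrier_vec n. v \<noteq> 0\<^sub>v n \<and> P 1 *\<^sub>v v = v \<and> P 2 *\<^sub>v v = v"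
      then obtain v where v: "v \<in> carrier_vec n" "v \<noteq> 0\<^sub>v n" "P 1 *\<^sub>v v = v" "P 2 *\<^sub>v v = v" by blast
      have "\<exists>w\<in>carrier_vec n. w \<noteq> 0\<^sub>v n \<and> P 1 *\<^sub>v w = 0\<^sub>v n \<and> P 2 *\<^sub>v w = 0\<^sub>v n"
        using D2'[OF cs(1-3) cs(4-6) _ v] r12 by simp
      hence "complex_of_real \<alpha> \<in> Lam P" using EigA by blast
      moreover have "l = ?f (complex_of_real \<alpha>)" using l0 fA by simp
      ultimately show ?thesis by blast
    next
      assume "l = ?c" thus ?thesis by blast
    qed
  next
    fix l assume l: "l \<in> {?c} \<union> ?f ` Lam P"
    show "l \<in> hyp_Lam n \<alpha> P"
    proof (cases "l = ?c")
      case True thus ?thesis using z by simp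
    next
      case False
      then obtain lam where lam: "lam \<in> Lam P" "l = ?f lam" using l by blast
      show ?thesis
      proof (cases "lam = 0")
        case True
        thus ?thesis using lam z by simp
      next
        case lnz: False
        show ?thesis
        proof (cases "lam = complex_of_real \<alpha>")
          case True
          then obtain w where w: "w \<in> carrier_vec n" "w \<noteq> 0\<^sub>v n" "P 1 *\<^sub>v w = 0\<^sub>v n" "P 2 *\<^sub>v w = 0\<^sub>v n"
            using lam(1) EigA by blast
          obtain v where "v \<in> carrier_vec n" "v \<noteq> 0\<^sub>v n" "P 1 *\<^sub>v v = v" "P 2 *\<^sub>v v = v"
            using D2[OF cs(1-3) cs(4-6) _ w] r12 by auto
          hence "0 \<in> hyp_Lam n \<alpha> P" using L_zero by blast
          moreover have "l = 0" using lam True fA by simp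
          ultimately show ?thesis by simp
        next
          case False
          thus ?thesis using L_gen[OF lam(1) lnz False] lam(2) by simp
        qed
      qed
    qed
  qed
qed

end



lemma eqv: "((x::complex) - a) + (x - b) = m * x \<longleftrightarrow> a + b = (2 - m) * x"
  by (auto simp: algebra_simps)

lemma Lam_refl:
  assumes rep: "is_rep n \<alpha> P"
  shows "Lam (lin_refl n P) = (\<lambda>l. 2 - l) ` Lam P"
proof -
  have c3: "P 3 \<in> carrier_mat n n" and c4: "P 4 \<in> carrier_mat n n" using rep_proj[OF rep] by auto
  have t3: "lin_refl n P 3 \<in> carrier_mat n n" and t4: "lin_refl n P 4 \<in> carrier_mat n n"
    unfolding lin_refl_def using c3 c4 by auto
  have ent: "(lin_refl n P i *\<^sub>v x) $ j = x $ j - (P i *\<^sub>v x) $ j"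
    if x: "x \<in> carrier_vec n" and j: "j < n" and c: "P i \<in> carrier_mat n n" for x j i
    unfolding lin_refl_def minus_mult_distrib_mat_vec[OF one_carrier_mat c x] using x j c by simp
  have iff: "m \<in> Lam (lin_refl n P) \<longleftrightarrow> 2 - m \<in> Lam P" for m
  proof -
    have "(\<forall>j<n. (lin_refl n P 3 *\<^sub>v x) $ j + (lin_refl n P 4 *\<^sub>v x) $ j = m * x $ j)
        \<longleftrightarrow> (\<forall>j<n. (P 3 *\<^sub>v x) $ j + (P 4 *\<^sub>v x) $ j = (2 - m) * x $ j)" if x: "x \<in> carrier_vec n" for x
      using ent[OF x _ c3] ent[OF x _ c4] eqv by simp
    thus ?thesis unfolding mem_Lam[OF t3 t4] mem_Lam[OF c3 c4] by blast
  qed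
  show ?thesis
  proof (rule equalityI; rule subsetI)
    fix m assume "m \<in> Lam (lin_refl n P)"
    hence "2 - m \<in> Lam P" using iff by blast
    moreover have "m = 2 - (2 - m)" by simp
    ultimately show "m \<in> (\<lambda>l. 2 - l) ` Lam P" by blast
  next
    fix m assume "m \<in> (\<lambda>l. 2 - l) ` Lam P"
    then obtain l where "l \<in> Lam P" "m = 2 - l" by blast
    thus "m \<in> Lam (lin_refl n P)" using iff by simp
  qed
qed

lemma rep_refl:
  assumes rep: "is_rep n \<alpha> P"
  shows "is_rep n (4 - \<alpha>) (lin_refl n P)"
proof -
  have c: "P i \<in> carrier_mat n n" "P i * P i = P i" "mat_adjoint (P i) = P i" if "i \<in> {1..4}" for i
    using rep_proj[OF rep that] by auto
  have A: "\<forall>i\<in>{1..4::nat}. lin_refl n P i \<in> carrier_mat n n \<and> lin_refl n P i * lin_refl n P i = lin_refl n P i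
      \<and> mat_adjoint (lin_refl n P i) = lin_refl n P i"
  proof (intro ballI conjI)
    fix i :: nat assume i: "i \<in> {1..4}"
    show "lin_refl n P i \<in> carrier_mat n n" unfolding lin_refl_def using minus_carrier_mat[OF c(1)[OF i]] .
    show "lin_refl n P i * lin_refl n P i = lin_refl n P i" unfolding lin_refl_def using compl_idem[OF c(1,2)[OF i]] .
    show "mat_adjoint (lin_refl n P i) = lin_refl n P i" unfolding lin_refl_def using compl_adj[OF c(1,3)[OF i]] .
  qed
  have s: "P 1 + P 2 + P 3 + P 4 = of_real \<alpha> \<cdot>\<^sub>m 1\<^sub>m n" using rep unfolding is_rep_def by simp
  have c1: "P 1 \<in> carrier_mat n n" and c2: "P 2 \<in> carrier_mat n n" and c3: "P 3 \<in> carrier_mat n n"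
    and c4: "P 4 \<in> carrier_mat n n" using c by auto
  have B: "lin_refl n P 1 + lin_refl n P 2 + lin_refl n P 3 + lin_refl n P 4 = of_real (4 - \<alpha>) \<cdot>\<^sub>m 1\<^sub>m n"
  proof (rule eq_matI)
    fix i j assume "i < dim_row (of_real (4 - \<alpha>) \<cdot>\<^sub>m 1\<^sub>m n :: complex mat)" "j < dim_col (of_real (4 - \<alpha>) \<cdot>\<^sub>m 1\<^sub>m n :: complex mat)"
    hence ij: "i < n" "j < n" by auto
    have "(P 1 + P 2 + P 3 + P 4) $$ (i,j) = (of_real \<alpha> \<cdot>\<^sub>m 1\<^sub>m n :: complex mat) $$ (i,j)" using s by simp
    hence e: "P 1 $$ (i,j) + P 2 $$ (i,j) + P 3 $$ (i,j) + P 4 $$ (i,j) = of_real \<alpha> * (if i = j then 1 else 0)"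
      using ij c1 c2 c3 c4 by simp
    have "(lin_refl n P 1 + lin_refl n P 2 + lin_refl n P 3 + lin_refl n P 4) $$ (i,j)
        = 4 * (if i = j then 1 else 0) - (P 1 $$ (i,j) + P 2 $$ (i,j) + P 3 $$ (i,j) + P 4 $$ (i,j))"
      unfolding lin_refl_def using ij c1 c2 c3 c4 by (simp add: algebra_simps)
    also have "\<dots> = (of_real (4 - \<alpha>) \<cdot>\<^sub>m 1\<^sub>m n :: complex mat) $$ (i,j)" unfolding e using ij by (simp add: algebra_simps)
    finally show "(lin_refl n P 1 + lin_refl n P 2 + lin_refl n P 3 + lin_refl n P 4) $$ (i,j) = (of_real (4 - \<alpha>) \<cdot>\<^sub>m 1\<^sub>m n :: complex mat) $$ (i,j)" .
  qed (unfold lin_refl_def, use c1 c2 c3 c4 in auto)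
  show ?thesis unfolding is_rep_def using A B by blast
qed

lemma rk_refl:
  assumes rep: "is_rep n \<alpha> P" and i: "i \<in> {1..4}"
  shows "rk n (lin_refl n P i) + rk n (P i) = n"
  unfolding lin_refl_def using rank_compl rep_proj[OF rep i] by auto

lemma id1:
  assumes "\<alpha> < 3"
  shows "complex_of_real ((4-\<alpha>)/((4-\<alpha>)-1)) - complex_of_real (1/((4-\<alpha>)-1)) * (2 - l)
     = complex_of_real (1 - 1/(3-\<alpha>)) + complex_of_real (1/(3-\<alpha>)) * l"
proof -
  have e: "(4-\<alpha>)-1 = 3-\<alpha>" by simp
  define d where "d = complex_of_real (3-\<alpha>)"
  have "3 - \<alpha> \<noteq> 0" using assms by simp
  hence dnz: "d \<noteq> 0" unfolding d_def by (metis of_real_eq_0_iff)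
  have d1: "complex_of_real (4-\<alpha>) = d + 1" unfolding d_def by simp
  have "complex_of_real ((4-\<alpha>)/((4-\<alpha>)-1)) = (d+1)/d" unfolding e of_real_divide d1 d_def ..
  moreover have "complex_of_real (1/((4-\<alpha>)-1)) = 1/d" unfolding e d_def by simp
  moreover have "complex_of_real (1 - 1/(3-\<alpha>)) = 1 - 1/d" unfolding d_def by simp
  moreover have "complex_of_real (1/(3-\<alpha>)) = 1/d" unfolding d_def by simp
  ultimately show ?thesis using dnz by (simp add: field_simps)
qed

lemma id2:
  assumes "\<alpha> < 3"
  shows "complex_of_real ((4-\<alpha>)/((4-\<alpha>)-1)) = complex_of_real (1 + 1/(3-\<alpha>))"
proof -
  have "(4-\<alpha>)/((4-\<alpha>)-1) = 1 + 1/(3-\<alpha>)" using assms by (simp add: field_simps)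
  thus ?thesis by simp
qed

theorem lemma4p3:
  fixes n :: nat and \<alpha> :: real and P :: "nat \<Rightarrow> complex mat"
  assumes rep: "is_rep n \<alpha> P"
  shows "Lam (lin_refl n P) = (\<lambda>l. 2 - l) ` Lam P
    \<and> (\<alpha> > 0 \<and> \<alpha> \<noteq> 1 \<longrightarrow>
        (rk n (P 1) + rk n (P 2) > n \<and> n = rk n (P 3) + rk n (P 4) \<longrightarrow>
           hyp_Lam n \<alpha> P = {0} \<union> (\<lambda>l. of_real (\<alpha> / (\<alpha> - 1)) - of_real (1 / (\<alpha> - 1)) * l) ` Lam P)
      \<and> (rk n (P 3) + rk n (P 4) > n \<and> n = rk n (P 1) + rk n (P 2) \<longrightarrow>
           hyp_Lam n \<alpha> P = {of_real (\<alpha> / (\<alpha> - 1))}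
             \<union> (\<lambda>l. of_real (\<alpha> / (\<alpha> - 1)) - of_real (1 / (\<alpha> - 1)) * l) ` Lam P))
    \<and> (0 < \<alpha> \<and> \<alpha> < 3 \<longrightarrow>
        (rk n (P 1) + rk n (P 2) < n \<and> n = rk n (P 3) + rk n (P 4) \<longrightarrow>
           phi_plus_Lam n \<alpha> P = {0} \<union> (\<lambda>l. of_real (1 - 1 / (3 - \<alpha>)) + of_real (1 / (3 - \<alpha>)) * l) ` Lam P)
      \<and> (rk n (P 3) + rk n (P 4) < n \<and> n = rk n (P 1) + rk n (P 2) \<longrightarrow>
           phi_plus_Lam n \<alpha> P = {of_real (1 + 1 / (3 - \<alpha>))}
             \<union> (\<lambda>l. of_real (1 - 1 / (3 - \<alpha>)) + of_real (1 / (3 - \<alpha>)) * l) ` Lam P))"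
proof -
  have I: "Lam (lin_refl n P) = (\<lambda>l. 2 - l) ` Lam P" by (rule Lam_refl[OF rep])
  have II: "\<alpha> > 0 \<and> \<alpha> \<noteq> 1 \<longrightarrow>
        (rk n (P 1) + rk n (P 2) > n \<and> n = rk n (P 3) + rk n (P 4) \<longrightarrow>
           hyp_Lam n \<alpha> P = {0} \<union> (\<lambda>l. of_real (\<alpha> / (\<alpha> - 1)) - of_real (1 / (\<alpha> - 1)) * l) ` Lam P)
      \<and> (rk n (P 3) + rk n (P 4) > n \<and> n = rk n (P 1) + rk n (P 2) \<longrightarrow>
           hyp_Lam n \<alpha> P = {of_real (\<alpha> / (\<alpha> - 1))}
             \<union> (\<lambda>l. of_real (\<alpha> / (\<alpha> - 1)) - of_real (1 / (\<alpha> - 1)) * l) ` Lam P)"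
  proof (intro impI conjI)
    assume a: "\<alpha> > 0 \<and> \<alpha> \<noteq> 1"
    show "hyp_Lam n \<alpha> P = {0} \<union> (\<lambda>l. of_real (\<alpha> / (\<alpha> - 1)) - of_real (1 / (\<alpha> - 1)) * l) ` Lam P"
      if h: "rk n (P 1) + rk n (P 2) > n \<and> n = rk n (P 3) + rk n (P 4)"
      using main_a[OF rep] a h by blast
    show "hyp_Lam n \<alpha> P = {of_real (\<alpha> / (\<alpha> - 1))}
             \<union> (\<lambda>l. of_real (\<alpha> / (\<alpha> - 1)) - of_real (1 / (\<alpha> - 1)) * l) ` Lam P"
      if h: "rk n (P 3) + rk n (P 4) > n \<and> n = rk n (P 1) + rk n (P 2)"
      using main_b[OF rep] a h by blast
  qed
  have III: "0 < \<alpha> \<and> \<alpha> < 3 \<longrightarrow>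
        (rk n (P 1) + rk n (P 2) < n \<and> n = rk n (P 3) + rk n (P 4) \<longrightarrow>
           phi_plus_Lam n \<alpha> P = {0} \<union> (\<lambda>l. of_real (1 - 1 / (3 - \<alpha>)) + of_real (1 / (3 - \<alpha>)) * l) ` Lam P)
      \<and> (rk n (P 3) + rk n (P 4) < n \<and> n = rk n (P 1) + rk n (P 2) \<longrightarrow>
           phi_plus_Lam n \<alpha> P = {of_real (1 + 1 / (3 - \<alpha>))}
             \<union> (\<lambda>l. of_real (1 - 1 / (3 - \<alpha>)) + of_real (1 / (3 - \<alpha>)) * l) ` Lam P)"
  proof (intro impI conjI)
    assume a: "0 < \<alpha> \<and> \<alpha> < 3"
    define T where "T = lin_refl n P"
    have repT: "is_rep n (4-\<alpha>) T" unfolding T_def by (rule rep_refl[OF rep])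
    have a': "4 - \<alpha> > 0" and a1': "4 - \<alpha> \<noteq> 1" using a by auto
    have r1: "rk n (T 1) + rk n (P 1) = n" and r2: "rk n (T 2) + rk n (P 2) = n"
      and r3: "rk n (T 3) + rk n (P 3) = n" and r4: "rk n (T 4) + rk n (P 4) = n"
      unfolding T_def using rk_refl[OF rep] by auto
    have LT: "Lam T = (\<lambda>l. 2 - l) ` Lam P" using I T_def by simp
    have img: "(\<lambda>l. complex_of_real ((4-\<alpha>)/((4-\<alpha>)-1)) - complex_of_real (1/((4-\<alpha>)-1)) * l) ` Lam T
       = (\<lambda>l. complex_of_real (1 - 1/(3-\<alpha>)) + complex_of_real (1/(3-\<alpha>)) * l) ` Lam P"
      unfolding LT image_image by (rule image_cong[OF refl], rule id1) (use a in simp)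
    show "phi_plus_Lam n \<alpha> P = {0} \<union> (\<lambda>l. of_real (1 - 1 / (3 - \<alpha>)) + of_real (1 / (3 - \<alpha>)) * l) ` Lam P"
      if h: "rk n (P 1) + rk n (P 2) < n \<and> n = rk n (P 3) + rk n (P 4)"
    proof -
      have h1: "rk n (T 1) + rk n (T 2) > n" and h2: "n = rk n (T 3) + rk n (T 4)" using h r1 r2 r3 r4 by linarith+
      have "hyp_Lam n (4-\<alpha>) T = {0} \<union> (\<lambda>l. complex_of_real ((4-\<alpha>)/((4-\<alpha>)-1)) - complex_of_real (1/((4-\<alpha>)-1)) * l) ` Lam T"
        by (rule main_a[OF repT a' a1' h1 h2])
      thus ?thesis unfolding phi_plus_Lam_def T_def[symmetric] img .
    qed
    show "phi_plus_Lam n \<alpha> P = {of_real (1 + 1 / (3 - \<alpha>))}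
             \<union> (\<lambda>l. of_real (1 - 1 / (3 - \<alpha>)) + of_real (1 / (3 - \<alpha>)) * l) ` Lam P"
      if h: "rk n (P 3) + rk n (P 4) < n \<and> n = rk n (P 1) + rk n (P 2)"
    proof -
      have h1: "rk n (T 3) + rk n (T 4) > n" and h2: "n = rk n (T 1) + rk n (T 2)" using h r1 r2 r3 r4 by linarith+
      have "hyp_Lam n (4-\<alpha>) T = {complex_of_real ((4-\<alpha>)/((4-\<alpha>)-1))} \<union> (\<lambda>l. complex_of_real ((4-\<alpha>)/((4-\<alpha>)-1)) - complex_of_real (1/((4-\<alpha>)-1)) * l) ` Lam T"
        by (rule main_b[OF repT a' a1' h1 h2])
      hence "hyp_Lam n (4-\<alpha>) T = {complex_of_real ((4-\<alpha>)/((4-\<alpha>)-1))} \<union> (\<lambda>l. complex_of_real (1 - 1/(3-\<alpha>)) + complex_of_real (1/(3-\<alpha>)) * l) ` Lam P"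
        unfolding img .
      thus ?thesis unfolding phi_plus_Lam_def T_def[symmetric] id2[of \<alpha>, OF conjunct2[OF a]] .
    qed
  qed
  show ?thesis using I II III by blast
qed


end
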